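(* Let $f:H_0\to H_1$ be an injective homomorphism of free left $\bar k[\sigma]$-modules of finite rank with $n:=\dim_{\bar k}\operatorname{coker}(f)<\infty$. Then $\#\ker\big(f\bmod(\sigma-1)\big)\le q^n$, with equality if and only if $f\bmod\sigma$ is bijective.
   Context: $\bar k$ is the algebraic closure of $k=\mathbb F_q(T)$ (a perfect field). $\bar k[\sigma]$ is the noncommutative polynomial ring over $\bar k$ in $\sigma$ with $\sigma x=x^{q^{-1}}\sigma$ for $x\in\bar k$. For a homomorphism $f:H_0\to H_1$ of left $\bar k[\sigma]$-modules, $f\bmod\sigma:H_0/\sigma H_0\to H_1/\sigma H_1$ and $f\bmod(\sigma-1):H_0/(\sigma-1)H_0\to H_1/(\sigma-1)H_1$ are the induced maps. *)

theory Defs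
  imports "HOL-Algebra.Ring" "HOL-Algebra.AbelCoset" "HOL-Algebra.Module"
          "HOL-Computational_Algebra.Polynomial" "HOL-Computational_Algebra.Primes"
begin

text \<open>The whole type 'a is the field kbar.\<close>

definition Fq :: "nat \<Rightarrow> 'a::field set" where
  "Fq q = {x. x ^ q = x}"

definition FqT :: "nat \<Rightarrow> 'a::field \<Rightarrow> 'a set" where
  "FqT q T = {poly A T / poly B T | A B.
      (\<forall>i. coeff A i \<in> Fq q) \<and> (\<forall>i. coeff B i \<in> Fq q) \<and> poly B T \<noteq> 0}"

definition is_alg_closure_of_FqT :: "nat \<Rightarrow> 'a::field \<Rightarrow> bool" where
  "is_alg_closure_of_FqT q T \<longleftrightarrow>
     (\<exists>p e. prime p \<and> e > 0 \<and> q = p ^ e \<and> CHAR('a) = p)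
   \<and> (\<forall>P :: 'a poly. P \<noteq> 0 \<and> (\<forall>i. coeff P i \<in> Fq q) \<longrightarrow> poly P T \<noteq> 0)
   \<and> (\<forall>P :: 'a poly. degree P > 0 \<longrightarrow> (\<exists>x. poly P x = 0))
   \<and> (\<forall>x::'a. \<exists>P. P \<noteq> 0 \<and> (\<forall>i. coeff P i \<in> FqT q T) \<and> poly P x = 0)"

definition frob_inv :: "nat \<Rightarrow> 'a::field \<Rightarrow> 'a" where
  "frob_inv q x = (THE y. y ^ q = x)"

text \<open>An element sum_i a_i sigma^i is the finitely supported coefficient function a.
 (a sigma^i)(b sigma^j) = a b^(q^-i) sigma^(i+j).\<close>

definition skew_poly_ring :: "nat \<Rightarrow> (nat \<Rightarrow> 'a::field) ring" where
  "skew_poly_ring q = \<lparr>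
     partial_object.carrier = {f. finite {i. f i \<noteq> 0}},
     monoid.mult = (\<lambda>f g n. \<Sum>i\<le>n. f i * (frob_inv q ^^ i) (g (n - i))),
     monoid.one = (\<lambda>n. if n = 0 then 1 else 0),
     ring.zero = (\<lambda>n. 0),
     ring.add = (\<lambda>f g n. f n + g n) \<rparr>"

definition skew_const :: "'a::field \<Rightarrow> nat \<Rightarrow> 'a" where
  "skew_const c = (\<lambda>n. if n = 0 then c else 0)"

definition skew_sigma :: "nat \<Rightarrow> 'a::field" where
  "skew_sigma = (\<lambda>n. if n = 1 then 1 else 0)"

definition left_module :: "('r, 'x) ring_scheme \<Rightarrow> ('r, 'm) module \<Rightarrow> bool" where
  "left_module R M \<longleftrightarrow> ring R \<and> abelian_group M \<and>
    (\<forall>a\<in>carrier R. \<forall>x\<in>carrier M. a \<odot>\<^bsub>M\<^esub> x \<in> carrier M) \<and>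
    (\<forall>a\<in>carrier R. \<forall>b\<in>carrier R. \<forall>x\<in>carrier M.
        (a \<oplus>\<^bsub>R\<^esub> b) \<odot>\<^bsub>M\<^esub> x = a \<odot>\<^bsub>M\<^esub> x \<oplus>\<^bsub>M\<^esub> b \<odot>\<^bsub>M\<^esub> x) \<and>
    (\<forall>a\<in>carrier R. \<forall>x\<in>carrier M. \<forall>y\<in>carrier M.
        a \<odot>\<^bsub>M\<^esub> (x \<oplus>\<^bsub>M\<^esub> y) = a \<odot>\<^bsub>M\<^esub> x \<oplus>\<^bsub>M\<^esub> a \<odot>\<^bsub>M\<^esub> y) \<and>
    (\<forall>a\<in>carrier R. \<forall>b\<in>carrier R. \<forall>x\<in>carrier M.
        (a \<otimes>\<^bsub>R\<^esub> b) \<odot>\<^bsub>M\<^esub> x = a \<odot>\<^bsub>M\<^esub> (b \<odot>\<^bsub>M\<^esub> x)) \<and>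
    (\<forall>x\<in>carrier M. \<one>\<^bsub>R\<^esub> \<odot>\<^bsub>M\<^esub> x = x)"

definition left_module_hom ::
    "('r, 'x) ring_scheme \<Rightarrow> ('r, 'm) module \<Rightarrow> ('r, 'n) module \<Rightarrow> ('m \<Rightarrow> 'n) set" where
  "left_module_hom R M N = {f. f \<in> carrier M \<rightarrow> carrier N \<and>
     (\<forall>x\<in>carrier M. \<forall>y\<in>carrier M. f (x \<oplus>\<^bsub>M\<^esub> y) = f x \<oplus>\<^bsub>N\<^esub> f y) \<and>
     (\<forall>a\<in>carrier R. \<forall>x\<in>carrier M. f (a \<odot>\<^bsub>M\<^esub> x) = a \<odot>\<^bsub>N\<^esub> f x)}"

definition free_finite_rank :: "('r, 'x) ring_scheme \<Rightarrow> ('r, 'm) module \<Rightarrow> bool" where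
  "free_finite_rank R M \<longleftrightarrow> (\<exists>B. finite B \<and> B \<subseteq> carrier M \<and>
     (\<forall>m\<in>carrier M. \<exists>!c. c \<in> B \<rightarrow>\<^sub>E carrier R \<and>
        m = finsum M (\<lambda>b. c b \<odot>\<^bsub>M\<^esub> b) B))"

text \<open>dim over kbar of coker f = N / f(M) equals n: there are v_0..v_(n-1) in N whose
 classes form a kbar-basis of the quotient (kbar acting through the constants).\<close>
definition coker_dim_eq ::
    "nat \<Rightarrow> (nat \<Rightarrow> 'a::field, 'm) module \<Rightarrow> (nat \<Rightarrow> 'a, 'n) module \<Rightarrow> ('m \<Rightarrow> 'n) \<Rightarrow> nat \<Rightarrow> bool" where
  "coker_dim_eq q M N f n \<longleftrightarrow> (\<exists>v. (\<forall>i<n. v i \<in> carrier N) \<and>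
     (\<forall>h\<in>carrier N. \<exists>a. \<exists>x\<in>carrier M.
        h = f x \<oplus>\<^bsub>N\<^esub> finsum N (\<lambda>i. skew_const (a i) \<odot>\<^bsub>N\<^esub> v i) {..<n}) \<and>
     (\<forall>a. finsum N (\<lambda>i. skew_const (a i) \<odot>\<^bsub>N\<^esub> v i) {..<n} \<in> f ` carrier M
          \<longrightarrow> (\<forall>i<n. a i = 0)))"

definition mult_image :: "('r, 'm) module \<Rightarrow> 'r \<Rightarrow> 'm set" where
  "mult_image M r = (\<lambda>h. r \<odot>\<^bsub>M\<^esub> h) ` carrier M"

definition quot_mod :: "('r, 'm) module \<Rightarrow> 'r \<Rightarrow> 'm set set" where
  "quot_mod M r = a_rcosets\<^bsub>M\<^esub> (mult_image M r)"

definition map_mod ::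
    "('r, 'm) module \<Rightarrow> ('r, 'n) module \<Rightarrow> ('m \<Rightarrow> 'n) \<Rightarrow> 'r \<Rightarrow> 'm set \<Rightarrow> 'n set" where
  "map_mod M N f r C = (mult_image N r) +>\<^bsub>N\<^esub> f (SOME h. h \<in> C)"

definition ker_map_mod ::
    "('r, 'm) module \<Rightarrow> ('r, 'n) module \<Rightarrow> ('m \<Rightarrow> 'n) \<Rightarrow> 'r \<Rightarrow> 'm set set" where
  "ker_map_mod M N f r = {C \<in> quot_mod M r. map_mod M N f r C = mult_image N r}"

end

theory Submission
  imports Defs "HOL-Library.Function_Algebras"
begin

lemma card_roots_sep:
  fixes P :: "'a::field poly"
  assumes alg: "\<And>Q::'a poly. degree Q > 0 \<Longrightarrow> \<exists>x. poly Q x = 0"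
  shows "P \<noteq> 0 \<Longrightarrow> (\<forall>x. poly P x = 0 \<longrightarrow> poly (pderiv P) x \<noteq> 0)
     \<Longrightarrow> card {x. poly P x = 0} = degree P"
proof (induction "degree P" arbitrary: P rule: less_induct)
  case less
  show ?case
  proof (cases "degree P = 0")
    case True
    then obtain c where "P = [:c:]" by (metis degree_eq_zeroE)
    with less.prems have "c \<noteq> 0" by auto
    with \<open>P = [:c:]\<close> True show ?thesis by simp
  next
    case False
    then obtain r where r: "poly P r = 0" using alg by blast
    define Q where "Q = synthetic_div P r"
    have PQ: "P = [:-r,1:] * Q" using synthetic_div_correct'[of r P] r by (simp add: Q_def)
    have Q0: "Q \<noteq> 0" using less.prems(1) PQ by auto
    have dd: "degree P = degree [:-r,1:] + degree Q"
      by (subst PQ, rule degree_mult_eq) (use Q0 in auto)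
    have degQ: "degree Q < degree P" using dd by simp
    have dP0: "pderiv P = [:-r,1:] * pderiv Q + Q * pderiv [:-r,1:]"
      by (subst PQ, rule pderiv_mult)
    have "pderiv [:-r,1::'a:] = 1" by (simp add: pderiv_pCons)
    then have dP: "pderiv P = Q + [:-r,1:] * pderiv Q" using dP0 by simp
    have Qr: "poly Q r \<noteq> 0" using less.prems(2) r dP by auto
    have sepQ: "\<forall>x. poly Q x = 0 \<longrightarrow> poly (pderiv Q) x \<noteq> 0"
    proof (intro allI impI)
      fix x assume "poly Q x = 0"
      then have "poly P x = 0" using PQ by simp
      then have "poly (pderiv P) x \<noteq> 0" using less.prems(2) by auto
      then show "poly (pderiv Q) x \<noteq> 0" using dP \<open>poly Q x = 0\<close> by auto
    qed
    have IH: "card {x. poly Q x = 0} = degree Q" using less.hyps[OF degQ Q0 sepQ] .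
    have roots: "{x. poly P x = 0} = insert r {x. poly Q x = 0}" using PQ by auto
    have "card {x. poly P x = 0} = Suc (card {x. poly Q x = 0})"
      unfolding roots using Qr poly_roots_finite[OF Q0] by simp
    also have "\<dots> = degree P" using IH dd by simp
    finally show ?thesis .
  qed
qed

lemma deg_monom_minus:
  assumes "n \<ge> 2" "degree p \<le> 1" shows "degree (monom (1::'a::field) n - p) = n"
proof -
  have "degree (monom (1::'a) n + - p) = n"
    using assms by (subst degree_add_eq_left) (auto simp: degree_monom_eq)
  then show ?thesis by simp
qed

locale fqc =
  fixes q :: nat and phi :: "'a::field \<Rightarrow> 'a"
  assumes phi_def: "phi = frob_inv q"
    and q_char: "\<exists>e>0. q = CHAR('a) ^ e"
    and prime_char: "prime CHAR('a)"
    and alg_closed: "\<And>P::'a poly. degree P > 0 \<Longrightarrow> \<exists>x. poly P x = 0"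
begin

lemma q_ge2: "q \<ge> 2"
proof -
  obtain e where e: "e > 0" "q = CHAR('a) ^ e" using q_char by blast
  have "CHAR('a) \<ge> 2" using prime_char prime_ge_2_nat by blast
  then have "CHAR('a) ^ e \<ge> CHAR('a) ^ 1" using e(1)
    by (intro power_increasing) auto
  with \<open>CHAR('a) \<ge> 2\<close> e(2) show ?thesis by simp
qed

lemma q_pos: "q > 0" using q_ge2 by simp

lemma q_zero: "(of_nat q :: 'a) = 0"
proof -
  obtain e where e: "e > 0" "q = CHAR('a) ^ e" using q_char by blast
  then show ?thesis by (simp add: of_nat_power)
qed

lemma pow_add: "((x::'a) + y) ^ q = x ^ q + y ^ q"
proof -
  obtain e where e: "e > 0" "q = CHAR('a) ^ e" using q_char by blast
  show ?thesis by (rule freshmans_dream'[OF prime_char e(2)])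
qed

lemma pow_sum: "(sum (g::'b \<Rightarrow> 'a) A) ^ q = (\<Sum>i\<in>A. g i ^ q)"
proof -
  obtain e where e: "e > 0" "q = CHAR('a) ^ e" using q_char by blast
  show ?thesis by (rule freshmans_dream_sum'[OF prime_char e(2)])
qed

lemma pow_zero: "(0::'a) ^ q = 0" using q_pos by simp

lemma pow_minus: "(- (x::'a)) ^ q = - (x ^ q)"
proof -
  have "(x + - x) ^ q = x ^ q + (- x) ^ q" by (rule pow_add)
  then have "0 = x ^ q + (- x) ^ q" using pow_zero by simp
  then show ?thesis by (simp add: eq_neg_iff_add_eq_0 add.commute)
qed

lemma pow_diff: "((x::'a) - y) ^ q = x ^ q - y ^ q"
  using pow_add[of x "- y"] pow_minus[of y] by simp

lemma pow_inj: "(x::'a) ^ q = y ^ q \<Longrightarrow> x = y"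
proof -
  assume "x ^ q = y ^ q"
  then have "(x - y) ^ q = 0" by (simp add: pow_diff)
  then show "x = y" by simp
qed

lemma pow_surj: "\<exists>y::'a. y ^ q = x"
proof -
  let ?P = "monom (1::'a) q - [:x,0:]"
  have "degree ?P = q" by (rule deg_monom_minus[OF q_ge2]) simp
  then obtain y where "poly ?P y = 0" using alg_closed q_pos by (metis)
  then show ?thesis by (auto simp: poly_monom)
qed

lemma phi_pow: "phi x ^ q = x"
proof -
  obtain y where y: "y ^ q = x" using pow_surj by blast
  have "(THE y. y ^ q = x) = y" using y pow_inj by (intro the_equality) auto
  then show ?thesis unfolding phi_def frob_inv_def using y by simp
qed

lemma phi_of_pow: "phi (x ^ q) = x"
  using phi_pow pow_inj by blast

lemma phi_add: "phi (x + y) = phi x + phi y"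
  by (rule pow_inj) (simp add: pow_add phi_pow)

lemma phi_mult: "phi (x * y) = phi x * phi y"
  by (rule pow_inj) (simp add: power_mult_distrib phi_pow)

lemma phi_zero [simp]: "phi 0 = 0"
  by (rule pow_inj) (simp add: phi_pow pow_zero)

lemma phi_one [simp]: "phi 1 = 1"
  by (rule pow_inj) (simp add: phi_pow)

lemma phi_minus: "phi (- x) = - phi x"
  by (rule pow_inj) (simp add: phi_pow pow_minus)

lemma phi_diff: "phi (x - y) = phi x - phi y"
  by (rule pow_inj) (simp add: phi_pow pow_diff)

lemma phi_eq0_iff [simp]: "phi x = 0 \<longleftrightarrow> x = 0"
  by (metis phi_pow phi_zero pow_zero)

lemma phi_inj: "phi x = phi y \<Longrightarrow> x = y"
  by (metis phi_pow)

lemma phi_fix_iff: "phi c = c \<longleftrightarrow> c ^ q = c"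
  by (metis phi_pow phi_of_pow)

lemma phi_sum: "phi (sum g A) = (\<Sum>i\<in>A. phi (g i))"
  by (induction A rule: infinite_finite_induct) (auto simp: phi_add)

lemma card_Fq: "finite (Fq q :: 'a set) \<and> card (Fq q :: 'a set) = q"
proof -
  let ?P = "monom (1::'a) q - [:0,1:]"
  have deg: "degree ?P = q" by (rule deg_monom_minus[OF q_ge2]) simp
  then have P0: "?P \<noteq> 0" using q_ge2 by auto
  have dP: "pderiv ?P = [:- 1:]"
    using q_zero by (simp add: pderiv_monom pderiv_diff pderiv_pCons)
  have "card {x. poly ?P x = 0} = q"
    using card_roots_sep[OF alg_closed P0] dP deg by simp
  moreover have "{x. poly ?P x = 0} = Fq q" by (auto simp: Fq_def poly_monom)
  ultimately show ?thesis using poly_roots_finite[OF P0] by simp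
qed

lemma solve_artin: "\<exists>t::'a. t - t ^ q = b"
proof -
  let ?P = "monom (1::'a) q - [:b,1:]"
  have "degree ?P = q" by (rule deg_monom_minus[OF q_ge2]) simp
  then obtain y where "poly ?P y = 0" using alg_closed q_pos by (metis)
  then have "y ^ q - b - y = 0" by (auto simp: poly_monom algebra_simps)
  then have "(- y) - (- y) ^ q = b" by (simp add: pow_minus algebra_simps)
  then show ?thesis by blast
qed

end

lemma fqcI:
  assumes "is_alg_closure_of_FqT q (T::'a::field)"
  shows "fqc q (frob_inv q :: 'a \<Rightarrow> 'a)"
proof -
  from assms obtain p e where pe: "prime p" "e > 0" "q = p ^ e" "CHAR('a) = p"
    unfolding is_alg_closure_of_FqT_def by blast
  show ?thesis
    apply unfold_locales
    using pe assms unfolding is_alg_closure_of_FqT_def by auto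
qed

abbreviation (input) SR where "SR q \<equiv> skew_poly_ring q"

lemma SR_carrier: "carrier (skew_poly_ring q) = {f. finite {i. f i \<noteq> 0}}"
  by (simp add: skew_poly_ring_def)
lemma SR_mult: "f \<otimes>\<^bsub>skew_poly_ring q\<^esub> g = (\<lambda>n. \<Sum>i\<le>n. f i * (frob_inv q ^^ i) (g (n - i)))"
  by (simp add: skew_poly_ring_def)
lemma SR_one: "\<one>\<^bsub>skew_poly_ring q\<^esub> = (\<lambda>n. if n = 0 then 1 else 0)"
  by (simp add: skew_poly_ring_def)
lemma SR_zero: "\<zero>\<^bsub>skew_poly_ring q\<^esub> = (\<lambda>n. 0)"
  by (simp add: skew_poly_ring_def)
lemma SR_add: "f \<oplus>\<^bsub>skew_poly_ring q\<^esub> g = (\<lambda>n. f n + g n)"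
  by (simp add: skew_poly_ring_def)

lemma skew_const_carrier: "skew_const c \<in> carrier (skew_poly_ring q)"
proof -
  have "{i. skew_const c i \<noteq> 0} \<subseteq> {0}" by (auto simp: skew_const_def)
  then show ?thesis by (auto simp: SR_carrier intro: finite_subset)
qed

lemma skew_sigma_carrier: "skew_sigma \<in> carrier (skew_poly_ring q)"
proof -
  have "{i. (skew_sigma :: nat \<Rightarrow> 'a::field) i \<noteq> 0} \<subseteq> {1}" by (auto simp: skew_sigma_def)
  then show ?thesis by (auto simp: SR_carrier intro: finite_subset)
qed

definition sm1 :: "nat \<Rightarrow> 'a::field" where
  "sm1 = (\<lambda>n. if n = 1 then 1 else if n = 0 then -1 else 0)"

lemma sm1_carrier: "sm1 \<in> carrier (skew_poly_ring q)"
proof -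
  have "{i. (sm1 :: nat \<Rightarrow> 'a::field) i \<noteq> 0} \<subseteq> {0,1}" by (auto simp: sm1_def)
  then show ?thesis by (auto simp: SR_carrier intro: finite_subset)
qed

lemma sigma_minus_one:
  assumes "ring (skew_poly_ring q :: (nat \<Rightarrow> 'a::field) ring)"
  shows "skew_sigma \<ominus>\<^bsub>skew_poly_ring q\<^esub> \<one>\<^bsub>skew_poly_ring q\<^esub> = (sm1 :: nat \<Rightarrow> 'a::field)"
proof -
  interpret R: ring "skew_poly_ring q :: (nat \<Rightarrow> 'a) ring" by fact
  let ?m = "(\<lambda>n. if n = 0 then -1 else 0) :: nat \<Rightarrow> 'a"
  have mc: "?m \<in> carrier (skew_poly_ring q)"
  proof -
    have "{i. ?m i \<noteq> 0} \<subseteq> {0}" by auto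
    then show ?thesis by (auto simp: SR_carrier intro: finite_subset)
  qed
  have oc: "(\<lambda>n. if n = 0 then 1 else 0 :: 'a) \<in> carrier (skew_poly_ring q)"
  proof -
    have "{i. (\<lambda>n. if n = 0 then 1 else 0 :: 'a) i \<noteq> 0} \<subseteq> {0}" by auto
    then show ?thesis by (auto simp: SR_carrier intro: finite_subset)
  qed
  have "\<ominus>\<^bsub>skew_poly_ring q\<^esub> \<one>\<^bsub>skew_poly_ring q\<^esub> = ?m"
    by (rule R.minus_equality) (auto simp: SR_add SR_zero SR_one mc oc fun_eq_iff)
  then show ?thesis
    by (auto simp: a_minus_def SR_add skew_sigma_def sm1_def fun_eq_iff)
qed

context fqc
begin

lemma phi_iter_1: "(frob_inv q ^^ 1) = (phi :: 'a \<Rightarrow> 'a)" by (simp add: phi_def)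

lemma phi_iter_zero: "(frob_inv q ^^ i) (0::'a) = 0"
  by (induction i) (use phi_zero phi_one in \<open>auto simp: phi_def\<close>)

lemma phi_iter_one: "(frob_inv q ^^ i) (1::'a) = 1"
  by (induction i) (use phi_zero phi_one in \<open>auto simp: phi_def\<close>)

lemma phi_iter_mult: "(frob_inv q ^^ i) ((x::'a) * y) = (frob_inv q ^^ i) x * (frob_inv q ^^ i) y"
  by (induction i) (use phi_mult in \<open>auto simp: phi_def\<close>)

lemma sigma_mult: "(skew_sigma \<otimes>\<^bsub>skew_poly_ring q\<^esub> g) = (\<lambda>n. if n = 0 then 0 else phi (g (n - 1)))" for g :: "nat \<Rightarrow> 'a"
proof
  fix n
  show "(skew_sigma \<otimes>\<^bsub>skew_poly_ring q\<^esub> g) n = (if n = 0 then 0 else phi (g (n - 1)))"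
  proof (cases "n = 0")
    case True then show ?thesis by (simp add: SR_mult skew_sigma_def)
  next
    case False
    have "(\<Sum>i\<le>n. (skew_sigma::nat\<Rightarrow>'a) i * (frob_inv q ^^ i) (g (n - i)))
        = (\<Sum>i\<in>{1}. (skew_sigma::nat\<Rightarrow>'a) i * (frob_inv q ^^ i) (g (n - i)))"
      using False by (intro sum.mono_neutral_right) (auto simp: skew_sigma_def)
    then show ?thesis using False by (simp add: SR_mult skew_sigma_def phi_def)
  qed
qed

lemma sm1_mult: "(sm1 \<otimes>\<^bsub>skew_poly_ring q\<^esub> g) = (\<lambda>n. if n = 0 then - g 0 else phi (g (n - 1)) - g n)" for g :: "nat \<Rightarrow> 'a"
proof
  fix n
  show "(sm1 \<otimes>\<^bsub>skew_poly_ring q\<^esub> g) n = (if n = 0 then - g 0 else phi (g (n - 1)) - g n)"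
  proof (cases "n = 0")
    case True then show ?thesis by (simp add: SR_mult sm1_def)
  next
    case False
    have "(\<Sum>i\<le>n. (sm1::nat\<Rightarrow>'a) i * (frob_inv q ^^ i) (g (n - i)))
        = (\<Sum>i\<in>{0,1}. (sm1::nat\<Rightarrow>'a) i * (frob_inv q ^^ i) (g (n - i)))"
      using False by (intro sum.mono_neutral_right) (auto simp: sm1_def)
    then show ?thesis using False by (simp add: SR_mult sm1_def phi_def)
  qed
qed

lemma const_mult: "(skew_const c \<otimes>\<^bsub>skew_poly_ring q\<^esub> g) = (\<lambda>n. c * g n)" for g :: "nat \<Rightarrow> 'a"
proof
  fix n
  have "(\<Sum>i\<le>n. skew_const c i * (frob_inv q ^^ i) (g (n - i)))
        = (\<Sum>i\<in>{0}. skew_const c i * (frob_inv q ^^ i) (g (n - i)))"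
    by (intro sum.mono_neutral_right) (auto simp: skew_const_def)
  then show "(skew_const c \<otimes>\<^bsub>skew_poly_ring q\<^esub> g) n = c * g n"
    by (simp add: SR_mult skew_const_def)
qed

lemma mult_const: "(g \<otimes>\<^bsub>skew_poly_ring q\<^esub> skew_const c) = (\<lambda>n. g n * (frob_inv q ^^ n) c)" for g :: "nat \<Rightarrow> 'a"
proof
  fix n
  have "(\<Sum>i\<le>n. g i * (frob_inv q ^^ i) (skew_const c (n - i)))
        = (\<Sum>i\<in>{n}. g i * (frob_inv q ^^ i) (skew_const c (n - i)))"
    by (intro sum.mono_neutral_right) (auto simp: skew_const_def phi_iter_zero)
  then show "(g \<otimes>\<^bsub>skew_poly_ring q\<^esub> skew_const c) n = g n * (frob_inv q ^^ n) c"
    by (simp add: SR_mult skew_const_def)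
qed

lemma const_const: "skew_const c \<otimes>\<^bsub>skew_poly_ring q\<^esub> skew_const d = skew_const (c * d)" for c d :: 'a
  unfolding const_mult by (auto simp: skew_const_def fun_eq_iff)

lemma sigma_const: "skew_sigma \<otimes>\<^bsub>skew_poly_ring q\<^esub> skew_const c
    = skew_const (phi c) \<otimes>\<^bsub>skew_poly_ring q\<^esub> skew_sigma" for c :: 'a
  unfolding sigma_mult const_mult by (auto simp: skew_const_def skew_sigma_def fun_eq_iff)

lemma const_add: "skew_const c \<oplus>\<^bsub>skew_poly_ring q\<^esub> skew_const d = skew_const (c + d)" for c d :: 'a
  by (auto simp: SR_add skew_const_def fun_eq_iff)

lemma const_one: "skew_const 1 = \<one>\<^bsub>skew_poly_ring q\<^esub>"
  by (auto simp: SR_one skew_const_def fun_eq_iff)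

lemma const_zero: "skew_const 0 = \<zero>\<^bsub>skew_poly_ring q\<^esub>"
  by (auto simp: SR_zero skew_const_def fun_eq_iff)

lemma sigma_mult_inj: "skew_sigma \<otimes>\<^bsub>skew_poly_ring q\<^esub> g = \<zero>\<^bsub>skew_poly_ring q\<^esub> \<Longrightarrow> g = \<zero>\<^bsub>skew_poly_ring q\<^esub>" for g :: "nat \<Rightarrow> 'a"
proof -
  assume h: "skew_sigma \<otimes>\<^bsub>skew_poly_ring q\<^esub> g = \<zero>\<^bsub>skew_poly_ring q\<^esub>"
  have "g n = 0" for n
    using fun_cong[OF h, of "Suc n"] by (simp add: sigma_mult SR_zero)
  then show ?thesis by (auto simp: SR_zero)
qed

lemma sm1_mult_inj: "sm1 \<otimes>\<^bsub>skew_poly_ring q\<^esub> g = \<zero>\<^bsub>skew_poly_ring q\<^esub> \<Longrightarrow> g = \<zero>\<^bsub>skew_poly_ring q\<^esub>" for g :: "nat \<Rightarrow> 'a"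
proof -
  assume h: "sm1 \<otimes>\<^bsub>skew_poly_ring q\<^esub> g = \<zero>\<^bsub>skew_poly_ring q\<^esub>"
  have "g n = 0" for n
  proof (induction n)
    case 0 then show ?case using fun_cong[OF h, of 0] by (simp add: sm1_mult SR_zero)
  next
    case (Suc n) then show ?case using fun_cong[OF h, of "Suc n"] by (simp add: sm1_mult SR_zero)
  qed
  then show ?thesis by (auto simp: SR_zero)
qed

end

lemma (in abelian_group) self_add_zero:
  assumes x: "x \<in> carrier G" and e: "x \<oplus> x = x \<oplus> \<zero>"
  shows "x = \<zero>"
proof -
  have "\<zero> = x \<oplus> \<ominus> x" using x by (simp add: r_neg)
  also have "\<dots> = (x \<oplus> x) \<oplus> \<ominus> x" using e x by simp
  also have "\<dots> = x \<oplus> (x \<oplus> \<ominus> x)" using x by (simp add: a_assoc)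
  also have "\<dots> = x" using x by (simp add: r_neg)
  finally show ?thesis by simp
qed

lemma (in abelian_group) minus_zero_ag [simp]: "\<ominus> \<zero> = \<zero>"
  by (rule minus_equality) auto

lemma (in abelian_group) diff_add_cancel_ag:
  assumes "x \<in> carrier G" "y \<in> carrier G"
  shows "\<ominus> (x \<ominus> y) \<oplus> x = y"
proof -
  have "\<ominus> (x \<ominus> y) = \<ominus> x \<oplus> y" using assms by (simp add: a_minus_def minus_add minus_minus)
  then have "\<ominus> (x \<ominus> y) \<oplus> x = (\<ominus> x \<oplus> y) \<oplus> x" by simp
  also have "\<dots> = y \<oplus> (\<ominus> x \<oplus> x)" using assms by (simp add: a_ac)
  also have "\<dots> = y" using assms by (simp add: l_neg)
  finally show ?thesis .
qed

locale lmod =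
  fixes R :: "('r, 'x) ring_scheme" and M :: "('r, 'm) module"
  assumes lm: "left_module R M"
begin

sublocale R: ring R using lm by (simp add: left_module_def)
sublocale M: abelian_group M using lm by (simp add: left_module_def)

lemma smult_closed [simp, intro]: "a \<in> carrier R \<Longrightarrow> x \<in> carrier M \<Longrightarrow> a \<odot>\<^bsub>M\<^esub> x \<in> carrier M"
  using lm by (simp add: left_module_def)
lemma smult_l_distr: "a \<in> carrier R \<Longrightarrow> b \<in> carrier R \<Longrightarrow> x \<in> carrier M \<Longrightarrow>
    (a \<oplus>\<^bsub>R\<^esub> b) \<odot>\<^bsub>M\<^esub> x = a \<odot>\<^bsub>M\<^esub> x \<oplus>\<^bsub>M\<^esub> b \<odot>\<^bsub>M\<^esub> x"
  using lm by (simp add: left_module_def)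
lemma smult_r_distr: "a \<in> carrier R \<Longrightarrow> x \<in> carrier M \<Longrightarrow> y \<in> carrier M \<Longrightarrow>
    a \<odot>\<^bsub>M\<^esub> (x \<oplus>\<^bsub>M\<^esub> y) = a \<odot>\<^bsub>M\<^esub> x \<oplus>\<^bsub>M\<^esub> a \<odot>\<^bsub>M\<^esub> y"
  using lm by (simp add: left_module_def)
lemma smult_assoc: "a \<in> carrier R \<Longrightarrow> b \<in> carrier R \<Longrightarrow> x \<in> carrier M \<Longrightarrow>
    (a \<otimes>\<^bsub>R\<^esub> b) \<odot>\<^bsub>M\<^esub> x = a \<odot>\<^bsub>M\<^esub> (b \<odot>\<^bsub>M\<^esub> x)"
  using lm by (simp add: left_module_def)
lemma smult_one [simp]: "x \<in> carrier M \<Longrightarrow> \<one>\<^bsub>R\<^esub> \<odot>\<^bsub>M\<^esub> x = x"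
  using lm by (simp add: left_module_def)

lemma smult_zero_right [simp]: "a \<in> carrier R \<Longrightarrow> a \<odot>\<^bsub>M\<^esub> \<zero>\<^bsub>M\<^esub> = \<zero>\<^bsub>M\<^esub>"
proof -
  assume a: "a \<in> carrier R"
  have "a \<odot>\<^bsub>M\<^esub> \<zero>\<^bsub>M\<^esub> \<oplus>\<^bsub>M\<^esub> a \<odot>\<^bsub>M\<^esub> \<zero>\<^bsub>M\<^esub> = a \<odot>\<^bsub>M\<^esub> \<zero>\<^bsub>M\<^esub> \<oplus>\<^bsub>M\<^esub> \<zero>\<^bsub>M\<^esub>"
    using a by (simp flip: smult_r_distr)
  then show ?thesis using a by (intro M.self_add_zero) auto
qed

lemma smult_zero_left [simp]: "x \<in> carrier M \<Longrightarrow> \<zero>\<^bsub>R\<^esub> \<odot>\<^bsub>M\<^esub> x = \<zero>\<^bsub>M\<^esub>"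
proof -
  assume x: "x \<in> carrier M"
  have "\<zero>\<^bsub>R\<^esub> \<odot>\<^bsub>M\<^esub> x \<oplus>\<^bsub>M\<^esub> \<zero>\<^bsub>R\<^esub> \<odot>\<^bsub>M\<^esub> x = \<zero>\<^bsub>R\<^esub> \<odot>\<^bsub>M\<^esub> x \<oplus>\<^bsub>M\<^esub> \<zero>\<^bsub>M\<^esub>"
    using x by (simp flip: smult_l_distr)
  then show ?thesis using x by (intro M.self_add_zero) auto
qed

lemma smult_minus_right: "a \<in> carrier R \<Longrightarrow> x \<in> carrier M \<Longrightarrow> a \<odot>\<^bsub>M\<^esub> (\<ominus>\<^bsub>M\<^esub> x) = \<ominus>\<^bsub>M\<^esub> (a \<odot>\<^bsub>M\<^esub> x)"
proof -
  assume a: "a \<in> carrier R" and x: "x \<in> carrier M"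
  have "a \<odot>\<^bsub>M\<^esub> (\<ominus>\<^bsub>M\<^esub> x) \<oplus>\<^bsub>M\<^esub> a \<odot>\<^bsub>M\<^esub> x = \<zero>\<^bsub>M\<^esub>"
    using a x by (simp flip: smult_r_distr add: M.l_neg)
  then show ?thesis using a x by (intro M.minus_equality[symmetric]) auto
qed

lemma smult_diff: "a \<in> carrier R \<Longrightarrow> x \<in> carrier M \<Longrightarrow> y \<in> carrier M \<Longrightarrow>
    a \<odot>\<^bsub>M\<^esub> (x \<ominus>\<^bsub>M\<^esub> y) = a \<odot>\<^bsub>M\<^esub> x \<ominus>\<^bsub>M\<^esub> a \<odot>\<^bsub>M\<^esub> y"
  by (simp add: a_minus_def smult_r_distr smult_minus_right)

lemma smult_finsum:
  assumes "finite A" "a \<in> carrier R" "g \<in> A \<rightarrow> carrier M"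
  shows "a \<odot>\<^bsub>M\<^esub> finsum M g A = finsum M (\<lambda>i. a \<odot>\<^bsub>M\<^esub> g i) A"
  using assms
proof (induction A rule: finite_induct)
  case empty then show ?case by simp
next
  case (insert x F)
  then have g: "g \<in> F \<rightarrow> carrier M" "g x \<in> carrier M" by auto
  have "a \<odot>\<^bsub>M\<^esub> finsum M g (insert x F) = a \<odot>\<^bsub>M\<^esub> (g x \<oplus>\<^bsub>M\<^esub> finsum M g F)"
    using insert g by (simp add: M.finsum_insert)
  also have "\<dots> = a \<odot>\<^bsub>M\<^esub> g x \<oplus>\<^bsub>M\<^esub> finsum M (\<lambda>i. a \<odot>\<^bsub>M\<^esub> g i) F"
    using insert g by (simp add: smult_r_distr M.finsum_closed)
  also have "\<dots> = finsum M (\<lambda>i. a \<odot>\<^bsub>M\<^esub> g i) (insert x F)"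
    using insert g by (subst M.finsum_insert) (auto simp: Pi_def)
  finally show ?case .
qed

lemma mult_image_subgroup:
  assumes r: "r \<in> carrier R"
  shows "additive_subgroup (mult_image M r) M"
proof (rule additive_subgroupI)
  show "subgroup (mult_image M r) (add_monoid M)"
  proof
    show "mult_image M r \<subseteq> carrier (add_monoid M)"
      using r by (auto simp: mult_image_def)
    fix x y assume "x \<in> mult_image M r" "y \<in> mult_image M r"
    then obtain x' y' where "x' \<in> carrier M" "y' \<in> carrier M" "x = r \<odot>\<^bsub>M\<^esub> x'" "y = r \<odot>\<^bsub>M\<^esub> y'"
      by (auto simp: mult_image_def)
    then show "x \<otimes>\<^bsub>add_monoid M\<^esub> y \<in> mult_image M r"
      using r by (auto simp: mult_image_def smult_r_distr[symmetric] intro!: image_eqI)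
  next
    show "\<one>\<^bsub>add_monoid M\<^esub> \<in> mult_image M r"
      using r by (auto simp: mult_image_def intro!: image_eqI[of _ _ "\<zero>\<^bsub>M\<^esub>"])
  next
    fix x assume "x \<in> mult_image M r"
    then obtain x' where "x' \<in> carrier M" "x = r \<odot>\<^bsub>M\<^esub> x'" by (auto simp: mult_image_def)
    then show "inv\<^bsub>add_monoid M\<^esub> x \<in> mult_image M r"
      using r by (auto simp: mult_image_def smult_minus_right[symmetric] a_inv_def[symmetric]
          intro!: image_eqI)
  qed
qed

lemma mult_image_sub: "r \<in> carrier R \<Longrightarrow> mult_image M r \<subseteq> carrier M"
  by (auto simp: mult_image_def)

lemma free_inj:
  assumes free: "free_finite_rank R M" and r: "r \<in> carrier R"
    and rinj: "\<And>g. g \<in> carrier R \<Longrightarrow> r \<otimes>\<^bsub>R\<^esub> g = \<zero>\<^bsub>R\<^esub> \<Longrightarrow> g = \<zero>\<^bsub>R\<^esub>"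
    and h: "h \<in> carrier M" and rh: "r \<odot>\<^bsub>M\<^esub> h = \<zero>\<^bsub>M\<^esub>"
  shows "h = \<zero>\<^bsub>M\<^esub>"
proof -
  obtain B where PB: "finite B \<and> B \<subseteq> carrier M \<and> (\<forall>m\<in>carrier M. \<exists>!c. c \<in> B \<rightarrow>\<^sub>E carrier R \<and>
        m = finsum M (\<lambda>b. c b \<odot>\<^bsub>M\<^esub> b) B)"
    using free unfolding free_finite_rank_def by (elim exE) (rule that)
  have B: "finite B" "B \<subseteq> carrier M" using PB by simp_all
  have uniq: "\<And>m. m \<in> carrier M \<Longrightarrow> \<exists>!c. c \<in> B \<rightarrow>\<^sub>E carrier R \<and> m = finsum M (\<lambda>b. c b \<odot>\<^bsub>M\<^esub> b) B"
    using PB by (elim conjE) (rule bspec)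
  obtain c where c: "c \<in> B \<rightarrow>\<^sub>E carrier R" and hc: "h = finsum M (\<lambda>b. c b \<odot>\<^bsub>M\<^esub> b) B"
    using uniq[OF h] by blast
  have cb: "\<And>b. b \<in> B \<Longrightarrow> c b \<in> carrier R" using c by (auto simp: PiE_iff)
  have bc: "\<And>b. b \<in> B \<Longrightarrow> b \<in> carrier M" using B(2) by blast
  define c1 where "c1 = (\<lambda>b\<in>B. r \<otimes>\<^bsub>R\<^esub> c b)"
  define c2 where "c2 = (\<lambda>b\<in>B. \<zero>\<^bsub>R\<^esub>)"
  have c1E: "c1 \<in> B \<rightarrow>\<^sub>E carrier R" using cb r unfolding c1_def by (simp add: restrict_PiE_iff)
  have c2E: "c2 \<in> B \<rightarrow>\<^sub>E carrier R" unfolding c2_def by (simp add: restrict_PiE_iff)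
  have P1: "(\<lambda>b. c b \<odot>\<^bsub>M\<^esub> b) \<in> B \<rightarrow> carrier M" using cb bc by (simp add: Pi_iff)
  have P2: "(\<lambda>b. c1 b \<odot>\<^bsub>M\<^esub> b) \<in> B \<rightarrow> carrier M" using cb bc r by (simp add: Pi_iff c1_def)
  have "r \<odot>\<^bsub>M\<^esub> h = finsum M (\<lambda>b. r \<odot>\<^bsub>M\<^esub> (c b \<odot>\<^bsub>M\<^esub> b)) B"
    unfolding hc by (rule smult_finsum[OF B(1) r P1])
  also have "\<dots> = finsum M (\<lambda>b. c1 b \<odot>\<^bsub>M\<^esub> b) B"
    by (rule M.finsum_cong'[OF refl P2]) (simp add: c1_def smult_assoc cb bc r)
  finally have e1: "\<zero>\<^bsub>M\<^esub> = finsum M (\<lambda>b. c1 b \<odot>\<^bsub>M\<^esub> b) B" using rh by simp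
  have e2: "\<zero>\<^bsub>M\<^esub> = finsum M (\<lambda>b. c2 b \<odot>\<^bsub>M\<^esub> b) B"
  proof -
    have "finsum M (\<lambda>b. c2 b \<odot>\<^bsub>M\<^esub> b) B = finsum M (\<lambda>b. \<zero>\<^bsub>M\<^esub>) B"
      by (rule M.finsum_cong') (simp_all add: c2_def bc)
    then show ?thesis by simp
  qed
  have "c1 = c2" using uniq[OF M.zero_closed] c1E c2E e1 e2 by blast
  then have cz: "\<And>b. b \<in> B \<Longrightarrow> c b = \<zero>\<^bsub>R\<^esub>"
  proof -
    fix b assume b: "b \<in> B"
    have "c1 b = c2 b" using \<open>c1 = c2\<close> by simp
    then have "r \<otimes>\<^bsub>R\<^esub> c b = \<zero>\<^bsub>R\<^esub>" using b by (simp add: c1_def c2_def)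
    then show "c b = \<zero>\<^bsub>R\<^esub>" using rinj cb b by blast
  qed
  have "h = finsum M (\<lambda>b. \<zero>\<^bsub>M\<^esub>) B"
    unfolding hc by (rule M.finsum_cong') (simp_all add: cz bc)
  then show ?thesis by simp
qed

end

context abelian_group
begin

lemma rcos_eq_iff:
  assumes K: "additive_subgroup K G" and x: "x \<in> carrier G" and y: "y \<in> carrier G"
  shows "(K +> x = K +> y) \<longleftrightarrow> x \<ominus> y \<in> K"
proof -
  interpret K: additive_subgroup K G by fact
  show ?thesis
  proof
    assume e: "K +> x = K +> y"
    have "\<zero> \<oplus> x \<in> K +> x" unfolding a_r_coset_def' using K.zero_closed by blast
    then have "x \<in> K +> y" using e x by simp
    then obtain k where k: "k \<in> K" "x = k \<oplus> y" unfolding a_r_coset_def' by blast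
    have kc: "k \<in> carrier G" using K.a_subset k(1) by blast
    then have "x \<ominus> y = k" using y k(2) by (simp add: a_minus_def a_assoc r_neg)
    then show "x \<ominus> y \<in> K" using k by simp
  next
    assume d: "x \<ominus> y \<in> K"
    have ks: "\<And>k. k \<in> K \<Longrightarrow> k \<in> carrier G" using K.a_subset by blast
    show "K +> x = K +> y"
    proof
      show "K +> x \<subseteq> K +> y"
      proof
        fix z assume "z \<in> K +> x"
        then obtain k where k: "k \<in> K" "z = k \<oplus> x" unfolding a_r_coset_def' by blast
        have kc: "k \<in> carrier G" using ks k by blast
        have "k \<oplus> x = (k \<oplus> (x \<ominus> y)) \<oplus> y"
          using kc x y by (simp add: a_minus_def a_assoc l_neg)
        moreover have "k \<oplus> (x \<ominus> y) \<in> K" using k d by simp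
        ultimately show "z \<in> K +> y" unfolding a_r_coset_def' using k by blast
      qed
    next
      show "K +> y \<subseteq> K +> x"
      proof
        fix z assume "z \<in> K +> y"
        then obtain k where k: "k \<in> K" "z = k \<oplus> y" unfolding a_r_coset_def' by blast
        have kc: "k \<in> carrier G" using ks k by blast
        have "(k \<oplus> \<ominus> (x \<ominus> y)) \<oplus> x = k \<oplus> (\<ominus> (x \<ominus> y) \<oplus> x)"
          using kc x y by (simp add: a_assoc)
        also have "\<dots> = k \<oplus> y" using x y by (simp add: diff_add_cancel_ag)
        finally have "k \<oplus> y = (k \<oplus> \<ominus> (x \<ominus> y)) \<oplus> x" by simp
        moreover have "k \<oplus> \<ominus> (x \<ominus> y) \<in> K" using k d by simp
        ultimately show "z \<in> K +> x" unfolding a_r_coset_def' using k by blast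
      qed
    qed
  qed
qed

lemma rcos_mem:
  assumes K: "additive_subgroup K G" and x: "x \<in> carrier G" and h: "h \<in> K +> x"
  shows "h \<in> carrier G \<and> K +> h = K +> x"
proof -
  interpret K: additive_subgroup K G by fact
  obtain k where k: "k \<in> K" "h = k \<oplus> x" using h unfolding a_r_coset_def' by blast
  have kc: "k \<in> carrier G" using K.a_subset k by blast
  have hc: "h \<in> carrier G" using k kc x by simp
  have "h \<ominus> x = k" using k kc x by (simp add: a_minus_def a_assoc r_neg)
  then show ?thesis using hc rcos_eq_iff[OF K hc x] k by simp
qed

lemma rcos_self_K:
  assumes K: "additive_subgroup K G" and x: "x \<in> carrier G"
  shows "(K +> x = K) \<longleftrightarrow> x \<in> K"
proof -
  interpret K: additive_subgroup K G by fact
  have "K +> \<zero> = K" unfolding a_r_coset_def' using K.a_subset by force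
  then show ?thesis using rcos_eq_iff[OF K x zero_closed] x by (simp add: a_minus_def r_zero)
qed

lemma some_rcos:
  assumes K: "additive_subgroup K G" and x: "x \<in> carrier G"
  shows "(SOME h. h \<in> K +> x) \<in> carrier G \<and> K +> (SOME h. h \<in> K +> x) = K +> x
     \<and> (SOME h. h \<in> K +> x) \<ominus> x \<in> K"
proof -
  interpret K: additive_subgroup K G by fact
  have "\<zero> \<oplus> x \<in> K +> x" unfolding a_r_coset_def' using K.zero_closed by blast
  then have "\<exists>h. h \<in> K +> x" by blast
  then have hK: "(SOME h. h \<in> K +> x) \<in> K +> x" by (rule someI_ex)
  have 1: "(SOME h. h \<in> K +> x) \<in> carrier G \<and> K +> (SOME h. h \<in> K +> x) = K +> x"
    by (rule rcos_mem[OF K x hK])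
  then have "(SOME h. h \<in> K +> x) \<ominus> x \<in> K"
    using rcos_eq_iff[OF K _ x, of "SOME h. h \<in> K +> x"] by simp
  with 1 show ?thesis by simp
qed

end

context abelian_group
begin

lemma ag_swap4: "a \<in> carrier G \<Longrightarrow> b \<in> carrier G \<Longrightarrow> c \<in> carrier G \<Longrightarrow> d \<in> carrier G \<Longrightarrow>
   (a \<oplus> b) \<oplus> (c \<oplus> d) = (a \<oplus> c) \<oplus> (b \<oplus> d)"
  by (simp add: a_ac)

lemma ag_diff_add: "x \<in> carrier G \<Longrightarrow> y \<in> carrier G \<Longrightarrow> (x \<ominus> y) \<oplus> y = x"
  by (simp add: a_minus_def a_assoc l_neg)

lemma ag_diff_self: "x \<in> carrier G \<Longrightarrow> x \<ominus> x = \<zero>"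
  by (simp add: a_minus_def r_neg)

lemma ag_diff_eq0: "x \<in> carrier G \<Longrightarrow> y \<in> carrier G \<Longrightarrow> x \<ominus> y = \<zero> \<Longrightarrow> x = y"
  by (metis ag_diff_add l_zero)

lemma ag_eq_diff:
  assumes "a \<in> carrier G" "b \<in> carrier G" "c \<in> carrier G" "d \<in> carrier G" and e: "a \<oplus> b = c \<oplus> d"
  shows "b \<ominus> d = c \<ominus> a"
proof -
  have ab: "\<ominus> a \<oplus> (a \<oplus> b) = b" using assms(1,2) by (simp add: a_assoc[symmetric] l_neg)
  have "b \<ominus> d = (\<ominus> a \<oplus> (a \<oplus> b)) \<ominus> d" by (simp only: ab)
  also have "\<dots> = (\<ominus> a \<oplus> (c \<oplus> d)) \<ominus> d" using e by simp
  also have "\<dots> = \<ominus> a \<oplus> (c \<oplus> (d \<oplus> \<ominus> d))" using assms(1,3,4) by (simp add: a_minus_def a_assoc)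
  also have "\<dots> = c \<ominus> a" using assms(1,3,4) by (simp add: r_neg a_minus_def a_comm)
  finally show ?thesis .
qed

lemma ag_diff_diff: "a \<in> carrier G \<Longrightarrow> b \<in> carrier G \<Longrightarrow> c \<in> carrier G \<Longrightarrow> d \<in> carrier G \<Longrightarrow>
   (a \<oplus> b) \<ominus> (c \<oplus> d) = (a \<ominus> c) \<oplus> (b \<ominus> d)"
  by (simp add: a_minus_def minus_add a_ac)

end

context lmod
begin

lemma smult_minus_left: "a \<in> carrier R \<Longrightarrow> x \<in> carrier M \<Longrightarrow> (\<ominus>\<^bsub>R\<^esub> a) \<odot>\<^bsub>M\<^esub> x = \<ominus>\<^bsub>M\<^esub> (a \<odot>\<^bsub>M\<^esub> x)"
proof -
  assume a: "a \<in> carrier R" and x: "x \<in> carrier M"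
  have "(\<ominus>\<^bsub>R\<^esub> a) \<odot>\<^bsub>M\<^esub> x \<oplus>\<^bsub>M\<^esub> a \<odot>\<^bsub>M\<^esub> x = \<zero>\<^bsub>M\<^esub>"
    using a x by (simp flip: smult_l_distr add: R.l_neg)
  then show ?thesis using a x by (intro M.minus_equality[symmetric]) auto
qed

lemma smult_minus_ring: "a \<in> carrier R \<Longrightarrow> b \<in> carrier R \<Longrightarrow> x \<in> carrier M \<Longrightarrow>
   (a \<ominus>\<^bsub>R\<^esub> b) \<odot>\<^bsub>M\<^esub> x = a \<odot>\<^bsub>M\<^esub> x \<ominus>\<^bsub>M\<^esub> b \<odot>\<^bsub>M\<^esub> x"
  by (simp add: a_minus_def smult_l_distr smult_minus_left)

end

definition sc :: "'a::field \<Rightarrow> (nat \<Rightarrow> 'a) \<Rightarrow> (nat \<Rightarrow> 'a)" where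
  "sc c a = (\<lambda>i. c * a i)"

locale lsetup = fqc q phi
  for q :: nat and phi :: "'a::field \<Rightarrow> 'a" +
  fixes H0 :: "(nat \<Rightarrow> 'a, 'm) module" and H1 :: "(nat \<Rightarrow> 'a, 'n) module"
    and f :: "'m \<Rightarrow> 'n" and n :: nat
  assumes lm0: "left_module (skew_poly_ring q) H0"
    and lm1: "left_module (skew_poly_ring q) H1"
    and free0: "free_finite_rank (skew_poly_ring q) H0"
    and free1: "free_finite_rank (skew_poly_ring q) H1"
    and hom: "f \<in> left_module_hom (skew_poly_ring q) H0 H1"
    and finj: "inj_on f (carrier H0)"
    and coker: "coker_dim_eq q H0 H1 f n"
begin

sublocale M0: lmod "skew_poly_ring q" H0 using lm0 by (simp add: lmod_def)
sublocale M1: lmod "skew_poly_ring q" H1 using lm1 by (simp add: lmod_def)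

abbreviation RR :: "(nat \<Rightarrow> 'a) ring" where "RR \<equiv> skew_poly_ring q"

lemma sig_c [simp]: "skew_sigma \<in> carrier RR" by (rule skew_sigma_carrier)
lemma cst_c [simp]: "skew_const c \<in> carrier RR" by (rule skew_const_carrier)
lemma sm1_c [simp]: "sm1 \<in> carrier RR" by (rule sm1_carrier)

lemma f_closed [simp, intro]: "x \<in> carrier H0 \<Longrightarrow> f x \<in> carrier H1"
  using hom by (auto simp: left_module_hom_def)
lemma f_add: "x \<in> carrier H0 \<Longrightarrow> y \<in> carrier H0 \<Longrightarrow> f (x \<oplus>\<^bsub>H0\<^esub> y) = f x \<oplus>\<^bsub>H1\<^esub> f y"
  using hom by (auto simp: left_module_hom_def)
lemma f_smult: "a \<in> carrier RR \<Longrightarrow> x \<in> carrier H0 \<Longrightarrow> f (a \<odot>\<^bsub>H0\<^esub> x) = a \<odot>\<^bsub>H1\<^esub> f x"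
  using hom by (auto simp: left_module_hom_def)
lemma f_zero [simp]: "f \<zero>\<^bsub>H0\<^esub> = \<zero>\<^bsub>H1\<^esub>"
proof -
  have "f (\<zero>\<^bsub>RR\<^esub> \<odot>\<^bsub>H0\<^esub> \<zero>\<^bsub>H0\<^esub>) = \<zero>\<^bsub>RR\<^esub> \<odot>\<^bsub>H1\<^esub> f \<zero>\<^bsub>H0\<^esub>"
    by (rule f_smult) auto
  then show ?thesis by simp
qed
lemma f_minus: "x \<in> carrier H0 \<Longrightarrow> f (\<ominus>\<^bsub>H0\<^esub> x) = \<ominus>\<^bsub>H1\<^esub> f x"
proof -
  assume x: "x \<in> carrier H0"
  have "f (\<ominus>\<^bsub>H0\<^esub> x) \<oplus>\<^bsub>H1\<^esub> f x = \<zero>\<^bsub>H1\<^esub>"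
    using x by (simp flip: f_add add: M0.M.l_neg)
  then show ?thesis using x by (intro M1.M.minus_equality[symmetric]) auto
qed
lemma f_diff: "x \<in> carrier H0 \<Longrightarrow> y \<in> carrier H0 \<Longrightarrow> f (x \<ominus>\<^bsub>H0\<^esub> y) = f x \<ominus>\<^bsub>H1\<^esub> f y"
  by (simp add: a_minus_def f_add f_minus)
lemma f_eq: "x \<in> carrier H0 \<Longrightarrow> y \<in> carrier H0 \<Longrightarrow> f x = f y \<Longrightarrow> x = y"
  using finj by (auto simp: inj_on_def)

definition cokP :: "(nat \<Rightarrow> 'n) \<Rightarrow> bool" where
  "cokP v \<longleftrightarrow> (\<forall>i<n. v i \<in> carrier H1) \<and>
     (\<forall>h\<in>carrier H1. \<exists>a. \<exists>x\<in>carrier H0.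
        h = f x \<oplus>\<^bsub>H1\<^esub> finsum H1 (\<lambda>i. skew_const (a i) \<odot>\<^bsub>H1\<^esub> v i) {..<n}) \<and>
     (\<forall>a. finsum H1 (\<lambda>i. skew_const (a i) \<odot>\<^bsub>H1\<^esub> v i) {..<n} \<in> f ` carrier H0
          \<longrightarrow> (\<forall>i<n. a i = 0))"

definition vv :: "nat \<Rightarrow> 'n" where "vv = (SOME v. cokP v)"

lemma vv_prop: "cokP vv"
proof -
  have "\<exists>v. cokP v" using coker unfolding coker_dim_eq_def cokP_def .
  then show ?thesis unfolding vv_def by (rule someI_ex)
qed

lemma vv_closed: "i < n \<Longrightarrow> vv i \<in> carrier H1"
  using vv_prop by (simp add: cokP_def)

definition lin :: "(nat \<Rightarrow> 'a) \<Rightarrow> 'n" where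
  "lin a = finsum H1 (\<lambda>i. skew_const (a i) \<odot>\<^bsub>H1\<^esub> vv i) {..<n}"

lemma lin_Pi: "(\<lambda>i. skew_const (a i) \<odot>\<^bsub>H1\<^esub> vv i) \<in> {..<n} \<rightarrow> carrier H1"
  using vv_closed cst_c by auto

lemma lin_closed [simp, intro]: "lin a \<in> carrier H1"
  unfolding lin_def using lin_Pi by (rule M1.M.finsum_closed)

lemma lin_span: "h \<in> carrier H1 \<Longrightarrow> \<exists>a. \<exists>x\<in>carrier H0. h = f x \<oplus>\<^bsub>H1\<^esub> lin a"
  using vv_prop unfolding cokP_def lin_def by blast

lemma lin_indep: "lin a \<in> f ` carrier H0 \<Longrightarrow> i < n \<Longrightarrow> a i = 0"
  using vv_prop unfolding cokP_def lin_def by blast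

lemma lin_cong: "(\<And>i. i < n \<Longrightarrow> a i = b i) \<Longrightarrow> lin a = lin b"
  unfolding lin_def by (intro M1.M.finsum_cong'[OF refl lin_Pi]) auto

lemma lin_add: "lin (a + b) = lin a \<oplus>\<^bsub>H1\<^esub> lin b"
proof -
  have "lin (a + b) = finsum H1 (\<lambda>i. skew_const (a i) \<odot>\<^bsub>H1\<^esub> vv i \<oplus>\<^bsub>H1\<^esub> skew_const (b i) \<odot>\<^bsub>H1\<^esub> vv i) {..<n}"
    unfolding lin_def
  proof (intro M1.M.finsum_cong'[OF refl])
    show "(\<lambda>i. skew_const (a i) \<odot>\<^bsub>H1\<^esub> vv i \<oplus>\<^bsub>H1\<^esub> skew_const (b i) \<odot>\<^bsub>H1\<^esub> vv i) \<in> {..<n} \<rightarrow> carrier H1"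
      using vv_closed cst_c by auto
    fix i assume "i \<in> {..<n}"
    then show "skew_const ((a + b) i) \<odot>\<^bsub>H1\<^esub> vv i = skew_const (a i) \<odot>\<^bsub>H1\<^esub> vv i \<oplus>\<^bsub>H1\<^esub> skew_const (b i) \<odot>\<^bsub>H1\<^esub> vv i"
      using vv_closed cst_c
      by (simp add: const_add[symmetric] M1.smult_l_distr)
  qed
  also have "\<dots> = lin a \<oplus>\<^bsub>H1\<^esub> lin b"
    unfolding lin_def using lin_Pi by (intro M1.M.finsum_addf) auto
  finally show ?thesis .
qed

lemma lin_scale: "lin (sc c a) = skew_const c \<odot>\<^bsub>H1\<^esub> lin a"
proof -
  have "skew_const c \<odot>\<^bsub>H1\<^esub> lin a = finsum H1 (\<lambda>i. skew_const c \<odot>\<^bsub>H1\<^esub> (skew_const (a i) \<odot>\<^bsub>H1\<^esub> vv i)) {..<n}"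
    unfolding lin_def by (rule M1.smult_finsum[OF _ cst_c lin_Pi]) simp
  also have "\<dots> = lin (sc c a)"
    unfolding lin_def
    by (rule M1.M.finsum_cong'[OF refl lin_Pi])
       (use vv_closed cst_c in \<open>simp add: sc_def const_const[symmetric] M1.smult_assoc\<close>)
  finally show ?thesis by simp
qed

lemma lin_zero: "lin 0 = \<zero>\<^bsub>H1\<^esub>"
proof -
  have "lin 0 = finsum H1 (\<lambda>i. \<zero>\<^bsub>H1\<^esub>) {..<n}"
    unfolding lin_def
    by (rule M1.M.finsum_cong') (use vv_closed in \<open>auto simp: const_zero\<close>)
  then show ?thesis by simp
qed

lemma lin_neg: "lin (- a) = \<ominus>\<^bsub>H1\<^esub> lin a"
proof -
  have "lin (- a) \<oplus>\<^bsub>H1\<^esub> lin a = \<zero>\<^bsub>H1\<^esub>"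
    using lin_add[of "- a" a] lin_zero by simp
  then show ?thesis by (intro M1.M.minus_equality[symmetric]) auto
qed

lemma lin_diff: "lin (a - b) = lin a \<ominus>\<^bsub>H1\<^esub> lin b"
  using lin_add[of a "- b"] lin_neg[of b] by (simp add: a_minus_def)

definition trunc :: "(nat \<Rightarrow> 'a) \<Rightarrow> (nat \<Rightarrow> 'a)" where
  "trunc a = (\<lambda>i. if i < n then a i else 0)"

definition V0 :: "(nat \<Rightarrow> 'a) set" where
  "V0 = {a. \<forall>i\<ge>n. a i = 0}"

lemma trunc_V0 [simp]: "trunc a \<in> V0" by (simp add: trunc_def V0_def)
lemma trunc_id: "a \<in> V0 \<Longrightarrow> trunc a = a" by (auto simp: trunc_def V0_def fun_eq_iff)
lemma lin_trunc: "lin (trunc a) = lin a" by (rule lin_cong) (simp add: trunc_def)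
lemma trunc_add: "trunc (a + b) = trunc a + trunc b" by (simp add: trunc_def fun_eq_iff)
lemma trunc_sc: "trunc (sc c a) = sc c (trunc a)" by (simp add: trunc_def sc_def fun_eq_iff)
lemma trunc_zero: "trunc 0 = 0" by (simp add: trunc_def fun_eq_iff)

definition pi :: "'n \<Rightarrow> (nat \<Rightarrow> 'a)" where
  "pi h = trunc (SOME a. \<exists>x\<in>carrier H0. h = f x \<oplus>\<^bsub>H1\<^esub> lin a)"

lemma pi_char:
  assumes x: "x \<in> carrier H0" and h: "h = f x \<oplus>\<^bsub>H1\<^esub> lin a"
  shows "pi h = trunc a"
proof -
  have "\<exists>a. \<exists>x\<in>carrier H0. h = f x \<oplus>\<^bsub>H1\<^esub> lin a" using x h by blast
  then have "\<exists>x\<in>carrier H0. h = f x \<oplus>\<^bsub>H1\<^esub> lin (SOME a. \<exists>x\<in>carrier H0. h = f x \<oplus>\<^bsub>H1\<^esub> lin a)"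
    by (rule someI_ex)
  then obtain x' where x': "x' \<in> carrier H0" and h': "h = f x' \<oplus>\<^bsub>H1\<^esub> lin (SOME a. \<exists>x\<in>carrier H0. h = f x \<oplus>\<^bsub>H1\<^esub> lin a)"
    by blast
  define a' where "a' = (SOME a. \<exists>x\<in>carrier H0. h = f x \<oplus>\<^bsub>H1\<^esub> lin a)"
  have e: "f x \<oplus>\<^bsub>H1\<^esub> lin a = f x' \<oplus>\<^bsub>H1\<^esub> lin a'" using h h' a'_def by simp
  have "lin a \<ominus>\<^bsub>H1\<^esub> lin a' = f x' \<ominus>\<^bsub>H1\<^esub> f x"
    by (rule M1.M.ag_eq_diff) (use x x' e in auto)
  then have "lin (a - a') = f (x' \<ominus>\<^bsub>H0\<^esub> x)" using x x' by (simp add: lin_diff f_diff)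
  then have "lin (a - a') \<in> f ` carrier H0" using x x' by auto
  then have "\<And>i. i < n \<Longrightarrow> a i = a' i" using lin_indep by fastforce
  then show ?thesis unfolding pi_def a'_def[symmetric] by (auto simp: trunc_def fun_eq_iff)
qed

lemma pi_V0 [simp]: "pi h \<in> V0" by (simp add: pi_def)

lemma pi_f: "x \<in> carrier H0 \<Longrightarrow> pi (f x) = 0"
  using pi_char[of x "f x" 0] lin_zero trunc_zero by simp

lemma pi_lin: "pi (lin a) = trunc a"
  using pi_char[of "\<zero>\<^bsub>H0\<^esub>" "lin a" a] by simp

lemma decomp: "h \<in> carrier H1 \<Longrightarrow> \<exists>x\<in>carrier H0. h = f x \<oplus>\<^bsub>H1\<^esub> lin (pi h)"
proof -
  assume h: "h \<in> carrier H1"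
  obtain a x where x: "x \<in> carrier H0" and e: "h = f x \<oplus>\<^bsub>H1\<^esub> lin a" using lin_span[OF h] by blast
  have "pi h = trunc a" by (rule pi_char[OF x e])
  then show ?thesis using x e lin_trunc by auto
qed

lemma decompE:
  assumes "h \<in> carrier H1"
  obtains x a where "x \<in> carrier H0" "pi h = a" "h = f x \<oplus>\<^bsub>H1\<^esub> lin a"
  using decomp[OF assms] by blast

lemma pi_add: "h \<in> carrier H1 \<Longrightarrow> h' \<in> carrier H1 \<Longrightarrow> pi (h \<oplus>\<^bsub>H1\<^esub> h') = pi h + pi h'"
proof -
  assume h: "h \<in> carrier H1" and h': "h' \<in> carrier H1"
  obtain x a where x: "x \<in> carrier H0" and pa: "pi h = a" and e: "h = f x \<oplus>\<^bsub>H1\<^esub> lin a"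
    using decompE[OF h] by blast
  obtain x' a' where x': "x' \<in> carrier H0" and pa': "pi h' = a'" and e': "h' = f x' \<oplus>\<^bsub>H1\<^esub> lin a'"
    using decompE[OF h'] by blast
  have "h \<oplus>\<^bsub>H1\<^esub> h' = f (x \<oplus>\<^bsub>H0\<^esub> x') \<oplus>\<^bsub>H1\<^esub> lin (a + a')"
    using x x' by (simp add: e e' f_add lin_add M1.M.ag_swap4)
  then have "pi (h \<oplus>\<^bsub>H1\<^esub> h') = trunc (a + a')" using x x' by (intro pi_char) auto
  then show ?thesis using pa pa' pi_V0[of h] pi_V0[of h'] by (simp add: trunc_add trunc_id)
qed

lemma pi_zero: "pi \<zero>\<^bsub>H1\<^esub> = 0"
  using pi_f[of "\<zero>\<^bsub>H0\<^esub>"] by simp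

lemma pi_minus: "h \<in> carrier H1 \<Longrightarrow> pi (\<ominus>\<^bsub>H1\<^esub> h) = - pi h"
proof -
  assume h: "h \<in> carrier H1"
  have "pi (\<ominus>\<^bsub>H1\<^esub> h) + pi h = 0" using pi_add[of "\<ominus>\<^bsub>H1\<^esub> h" h] h by (simp add: M1.M.l_neg pi_zero)
  then show ?thesis by (simp add: eq_neg_iff_add_eq_0)
qed

lemma pi_diff: "h \<in> carrier H1 \<Longrightarrow> h' \<in> carrier H1 \<Longrightarrow> pi (h \<ominus>\<^bsub>H1\<^esub> h') = pi h - pi h'"
  by (simp add: a_minus_def pi_add pi_minus)

lemma pi_const: "h \<in> carrier H1 \<Longrightarrow> pi (skew_const c \<odot>\<^bsub>H1\<^esub> h) = sc c (pi h)"
proof -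
  assume h: "h \<in> carrier H1"
  obtain x a where x: "x \<in> carrier H0" and pa: "pi h = a" and e: "h = f x \<oplus>\<^bsub>H1\<^esub> lin a"
    using decompE[OF h] by blast
  have "skew_const c \<odot>\<^bsub>H1\<^esub> h = f (skew_const c \<odot>\<^bsub>H0\<^esub> x) \<oplus>\<^bsub>H1\<^esub> lin (sc c a)"
    using x cst_c by (simp add: e M1.smult_r_distr f_smult lin_scale)
  then have "pi (skew_const c \<odot>\<^bsub>H1\<^esub> h) = trunc (sc c a)"
    using x cst_c by (intro pi_char) auto
  then show ?thesis using pa pi_V0[of h] by (simp add: trunc_sc trunc_id)
qed

lemma pi_zero_iff: "h \<in> carrier H1 \<Longrightarrow> pi h = 0 \<longleftrightarrow> h \<in> f ` carrier H0"
proof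
  assume h: "h \<in> carrier H1" and p: "pi h = 0"
  obtain x a where x: "x \<in> carrier H0" and pa: "pi h = a" and e: "h = f x \<oplus>\<^bsub>H1\<^esub> lin a"
    using decompE[OF h] by blast
  then have "h = f x" using p lin_zero by simp
  then show "h \<in> f ` carrier H0" using x by blast
next
  assume "h \<in> f ` carrier H0" then show "pi h = 0" using pi_f by auto
qed

lemma pi_eq_iff: "h \<in> carrier H1 \<Longrightarrow> h' \<in> carrier H1 \<Longrightarrow> pi h = pi h' \<longleftrightarrow> h \<ominus>\<^bsub>H1\<^esub> h' \<in> f ` carrier H0"
  by (simp add: pi_zero_iff[symmetric] pi_diff)

definition S :: "(nat \<Rightarrow> 'a) \<Rightarrow> (nat \<Rightarrow> 'a)" where
  "S a = pi (skew_sigma \<odot>\<^bsub>H1\<^esub> lin a)"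

lemma S_V0 [simp]: "S a \<in> V0" by (simp add: S_def)


lemma S_add: "S (a + b) = S a + S b"
proof -
  have "skew_sigma \<odot>\<^bsub>H1\<^esub> lin (a + b) = skew_sigma \<odot>\<^bsub>H1\<^esub> lin a \<oplus>\<^bsub>H1\<^esub> skew_sigma \<odot>\<^bsub>H1\<^esub> lin b"
    unfolding lin_add by (rule M1.smult_r_distr[OF sig_c lin_closed lin_closed])
  then show ?thesis unfolding S_def using sig_c by (simp add: pi_add)
qed

lemma S_scale: "S (sc c a) = sc (phi c) (S a)"
proof -
  have "skew_sigma \<odot>\<^bsub>H1\<^esub> lin (sc c a) = (skew_sigma \<otimes>\<^bsub>RR\<^esub> skew_const c) \<odot>\<^bsub>H1\<^esub> lin a"
    using sig_c cst_c by (simp add: lin_scale M1.smult_assoc)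
  also have "\<dots> = skew_const (phi c) \<odot>\<^bsub>H1\<^esub> (skew_sigma \<odot>\<^bsub>H1\<^esub> lin a)"
    using sig_c cst_c by (simp add: sigma_const M1.smult_assoc)
  finally show ?thesis using sig_c by (simp add: S_def pi_const)
qed

lemma S_trunc: "S (trunc a) = S a" by (simp add: S_def lin_trunc)

lemma pi_sigma: "h \<in> carrier H1 \<Longrightarrow> pi (skew_sigma \<odot>\<^bsub>H1\<^esub> h) = S (pi h)"
proof -
  assume h: "h \<in> carrier H1"
  obtain x a where x: "x \<in> carrier H0" and pa: "pi h = a" and e: "h = f x \<oplus>\<^bsub>H1\<^esub> lin a"
    using decompE[OF h] by blast
  have "skew_sigma \<odot>\<^bsub>H1\<^esub> h = f (skew_sigma \<odot>\<^bsub>H0\<^esub> x) \<oplus>\<^bsub>H1\<^esub> skew_sigma \<odot>\<^bsub>H1\<^esub> lin a"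
    using x sig_c by (simp add: e M1.smult_r_distr f_smult)
  then show ?thesis using x sig_c pa
    by (simp add: pi_add pi_f S_def)
qed

lemma sm1_eq: "sm1 = skew_sigma \<ominus>\<^bsub>RR\<^esub> \<one>\<^bsub>RR\<^esub>"
proof -
  have "ring RR" using lm1 by (simp add: left_module_def)
  then show ?thesis using sigma_minus_one by metis
qed

lemma sm1_smult: "h \<in> carrier H1 \<Longrightarrow> sm1 \<odot>\<^bsub>H1\<^esub> h = skew_sigma \<odot>\<^bsub>H1\<^esub> h \<ominus>\<^bsub>H1\<^esub> h"
  using sig_c by (simp add: sm1_eq M1.smult_minus_ring)

lemma sm1_smult0: "h \<in> carrier H0 \<Longrightarrow> sm1 \<odot>\<^bsub>H0\<^esub> h = skew_sigma \<odot>\<^bsub>H0\<^esub> h \<ominus>\<^bsub>H0\<^esub> h"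
  using sig_c by (simp add: sm1_eq M0.smult_minus_ring)

lemma pi_sm1: "h \<in> carrier H1 \<Longrightarrow> pi (sm1 \<odot>\<^bsub>H1\<^esub> h) = S (pi h) - pi h"
  using sig_c by (simp add: sm1_smult pi_diff pi_sigma)

lemma sigma_inj1: "h \<in> carrier H1 \<Longrightarrow> skew_sigma \<odot>\<^bsub>H1\<^esub> h = \<zero>\<^bsub>H1\<^esub> \<Longrightarrow> h = \<zero>\<^bsub>H1\<^esub>"
  by (rule M1.free_inj[OF free1 sig_c]) (use sigma_mult_inj in auto)

lemma sm1_inj1: "h \<in> carrier H1 \<Longrightarrow> sm1 \<odot>\<^bsub>H1\<^esub> h = \<zero>\<^bsub>H1\<^esub> \<Longrightarrow> h = \<zero>\<^bsub>H1\<^esub>"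
  by (rule M1.free_inj[OF free1 sm1_c]) (use sm1_mult_inj in auto)

end

lemma (in abelian_group) ag_diff_swap:
  assumes "x \<in> carrier G" "y \<in> carrier G" "x \<ominus> y = z"
  shows "x \<ominus> z = y"
proof -
  have "x \<ominus> z = x \<ominus> (x \<ominus> y)" using assms(3) by simp
  also have "\<dots> = x \<oplus> (\<ominus> x \<oplus> y)" using assms(1,2) by (simp add: a_minus_def minus_add minus_minus)
  also have "\<dots> = y" using assms(1,2) by (simp add: a_assoc[symmetric] r_neg)
  finally show ?thesis .
qed

context lsetup
begin

lemma quot_mod_iff0: "C \<in> quot_mod H0 r \<longleftrightarrow> (\<exists>x\<in>carrier H0. C = mult_image H0 r +>\<^bsub>H0\<^esub> x)"
  unfolding quot_mod_def A_RCOSETS_def' by blast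

lemma quot_mod_iff1: "C \<in> quot_mod H1 r \<longleftrightarrow> (\<exists>x\<in>carrier H1. C = mult_image H1 r +>\<^bsub>H1\<^esub> x)"
  unfolding quot_mod_def A_RCOSETS_def' by blast

lemma mi0_sub: "r \<in> carrier RR \<Longrightarrow> additive_subgroup (mult_image H0 r) H0"
  by (rule M0.mult_image_subgroup)
lemma mi1_sub: "r \<in> carrier RR \<Longrightarrow> additive_subgroup (mult_image H1 r) H1"
  by (rule M1.mult_image_subgroup)

lemma mi_mem: "r \<in> carrier RR \<Longrightarrow> y \<in> carrier H1 \<Longrightarrow> r \<odot>\<^bsub>H1\<^esub> y \<in> mult_image H1 r"
  by (auto simp: mult_image_def)
lemma mi_mem0: "r \<in> carrier RR \<Longrightarrow> y \<in> carrier H0 \<Longrightarrow> r \<odot>\<^bsub>H0\<^esub> y \<in> mult_image H0 r"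
  by (auto simp: mult_image_def)

lemma map_mod_coset:
  assumes r: "r \<in> carrier RR" and x: "x \<in> carrier H0"
  shows "map_mod H0 H1 f r (mult_image H0 r +>\<^bsub>H0\<^esub> x) = mult_image H1 r +>\<^bsub>H1\<^esub> f x"
proof -
  define h where "h = (SOME h. h \<in> mult_image H0 r +>\<^bsub>H0\<^esub> x)"
  have hp: "h \<in> carrier H0" "h \<ominus>\<^bsub>H0\<^esub> x \<in> mult_image H0 r"
    using M0.M.some_rcos[OF mi0_sub[OF r] x] unfolding h_def by auto
  then obtain y where y: "y \<in> carrier H0" "h \<ominus>\<^bsub>H0\<^esub> x = r \<odot>\<^bsub>H0\<^esub> y"
    by (auto simp: mult_image_def)
  have "f h \<ominus>\<^bsub>H1\<^esub> f x = r \<odot>\<^bsub>H1\<^esub> f y"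
    using hp(1) x y r by (simp flip: f_diff add: f_smult)
  then have "f h \<ominus>\<^bsub>H1\<^esub> f x \<in> mult_image H1 r" using r y mi_mem by simp
  then have "mult_image H1 r +>\<^bsub>H1\<^esub> f h = mult_image H1 r +>\<^bsub>H1\<^esub> f x"
    using M1.M.rcos_eq_iff[OF mi1_sub[OF r]] hp(1) x by simp
  then show ?thesis unfolding map_mod_def h_def .
qed

definition Fix :: "(nat \<Rightarrow> 'a) set" where "Fix = {a \<in> V0. S a = a}"

definition xa :: "(nat \<Rightarrow> 'a) \<Rightarrow> 'm" where
  "xa a = (SOME x. x \<in> carrier H0 \<and> f x = sm1 \<odot>\<^bsub>H1\<^esub> lin a)"

lemma xa_prop: "a \<in> Fix \<Longrightarrow> xa a \<in> carrier H0 \<and> f (xa a) = sm1 \<odot>\<^bsub>H1\<^esub> lin a"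
proof -
  assume a: "a \<in> Fix"
  have "pi (sm1 \<odot>\<^bsub>H1\<^esub> lin a) = S (trunc a) - trunc a" by (simp add: pi_sm1 pi_lin)
  also have "\<dots> = 0" using a by (simp add: Fix_def S_trunc trunc_id)
  finally have "sm1 \<odot>\<^bsub>H1\<^esub> lin a \<in> f ` carrier H0" using pi_zero_iff by simp
  then have "\<exists>x. x \<in> carrier H0 \<and> f x = sm1 \<odot>\<^bsub>H1\<^esub> lin a" by auto
  then show ?thesis unfolding xa_def by (rule someI_ex)
qed

definition Phi :: "(nat \<Rightarrow> 'a) \<Rightarrow> 'm set" where
  "Phi a = mult_image H0 sm1 +>\<^bsub>H0\<^esub> xa a"

lemma ker_bij: "bij_betw Phi Fix (ker_map_mod H0 H1 f sm1)"
proof (rule bij_betw_imageI)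
  show "inj_on Phi Fix"
  proof (rule inj_onI)
    fix a b assume a: "a \<in> Fix" and b: "b \<in> Fix" and e: "Phi a = Phi b"
    have xa: "xa a \<in> carrier H0" "f (xa a) = sm1 \<odot>\<^bsub>H1\<^esub> lin a" using xa_prop[OF a] by auto
    have xb: "xa b \<in> carrier H0" "f (xa b) = sm1 \<odot>\<^bsub>H1\<^esub> lin b" using xa_prop[OF b] by auto
    have "xa a \<ominus>\<^bsub>H0\<^esub> xa b \<in> mult_image H0 sm1"
      using e M0.M.rcos_eq_iff[OF mi0_sub[OF sm1_c] xa(1) xb(1)] by (simp add: Phi_def)
    then obtain y where y: "y \<in> carrier H0" "xa a \<ominus>\<^bsub>H0\<^esub> xa b = sm1 \<odot>\<^bsub>H0\<^esub> y"
      unfolding mult_image_def by blast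
    have "sm1 \<odot>\<^bsub>H1\<^esub> (lin a \<ominus>\<^bsub>H1\<^esub> lin b) = f (xa a) \<ominus>\<^bsub>H1\<^esub> f (xa b)"
      using xa xb by (simp add: M1.smult_diff)
    also have "\<dots> = sm1 \<odot>\<^bsub>H1\<^esub> f y" using xa(1) xb(1) y by (simp flip: f_diff add: f_smult)
    finally have "sm1 \<odot>\<^bsub>H1\<^esub> ((lin a \<ominus>\<^bsub>H1\<^esub> lin b) \<ominus>\<^bsub>H1\<^esub> f y) = \<zero>\<^bsub>H1\<^esub>"
      using y by (simp add: M1.smult_diff M1.M.ag_diff_self)
    note z = this
    have c1: "(lin a \<ominus>\<^bsub>H1\<^esub> lin b) \<ominus>\<^bsub>H1\<^esub> f y \<in> carrier H1" using y(1) by simp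
    have "(lin a \<ominus>\<^bsub>H1\<^esub> lin b) \<ominus>\<^bsub>H1\<^esub> f y = \<zero>\<^bsub>H1\<^esub>" by (rule sm1_inj1[OF c1 z])
    then have L0: "lin a \<ominus>\<^bsub>H1\<^esub> lin b = f y" by (rule M1.M.ag_diff_eq0[rotated 2]) (use y(1) in simp_all)
    have L: "lin (a - b) = f y" using L0 by (simp add: lin_diff)
    have "trunc (a - b) = 0" using pi_lin[of "a - b"] pi_f[OF y(1)] L by simp
    moreover have "a - b \<in> V0" using a b by (auto simp: Fix_def V0_def)
    ultimately show "a = b" by (simp add: trunc_id)
  qed
next
  show "Phi ` Fix = ker_map_mod H0 H1 f sm1"
  proof
    show "Phi ` Fix \<subseteq> ker_map_mod H0 H1 f sm1"
    proof
      fix C assume "C \<in> Phi ` Fix"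
      then obtain a where a: "a \<in> Fix" and C: "C = Phi a" by blast
      have xa: "xa a \<in> carrier H0" "f (xa a) = sm1 \<odot>\<^bsub>H1\<^esub> lin a" using xa_prop[OF a] by auto
      have "C \<in> quot_mod H0 sm1" using xa C by (auto simp: quot_mod_iff0 Phi_def)
      moreover have "map_mod H0 H1 f sm1 C = mult_image H1 sm1"
      proof -
        have "map_mod H0 H1 f sm1 C = mult_image H1 sm1 +>\<^bsub>H1\<^esub> f (xa a)"
          unfolding C Phi_def by (rule map_mod_coset[OF sm1_c xa(1)])
        also have "\<dots> = mult_image H1 sm1"
          using M1.M.rcos_self_K[OF mi1_sub[OF sm1_c]] xa mi_mem[OF sm1_c lin_closed] by simp
        finally show ?thesis .
      qed
      ultimately show "C \<in> ker_map_mod H0 H1 f sm1" by (simp add: ker_map_mod_def)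
    qed
  next
    show "ker_map_mod H0 H1 f sm1 \<subseteq> Phi ` Fix"
    proof
      fix C assume C: "C \<in> ker_map_mod H0 H1 f sm1"
      then obtain x where x: "x \<in> carrier H0" and Cx: "C = mult_image H0 sm1 +>\<^bsub>H0\<^esub> x"
        by (auto simp: ker_map_mod_def quot_mod_iff0)
      have "mult_image H1 sm1 +>\<^bsub>H1\<^esub> f x = mult_image H1 sm1"
        using C Cx map_mod_coset[OF sm1_c x] by (simp add: ker_map_mod_def)
      then have "f x \<in> mult_image H1 sm1" using M1.M.rcos_self_K[OF mi1_sub[OF sm1_c]] x by simp
      then obtain h where h: "h \<in> carrier H1" "f x = sm1 \<odot>\<^bsub>H1\<^esub> h" by (auto simp: mult_image_def)
      obtain y a where y: "y \<in> carrier H0" and pa: "pi h = a" and hy: "h = f y \<oplus>\<^bsub>H1\<^esub> lin a"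
        using decompE[OF h(1)] by blast
      have aV: "a \<in> V0" using pa pi_V0 by auto
      have "S a - a = 0" using pi_sm1[OF h(1)] pa h(2) pi_f[OF x] by simp
      then have aF: "a \<in> Fix" using aV by (simp add: Fix_def)
      have xa: "xa a \<in> carrier H0" "f (xa a) = sm1 \<odot>\<^bsub>H1\<^esub> lin a" using xa_prop[OF aF] by auto
      have "f x = f (sm1 \<odot>\<^bsub>H0\<^esub> y \<oplus>\<^bsub>H0\<^esub> xa a)"
        using h(2) hy y xa by (simp add: M1.smult_r_distr f_add f_smult)
      note fe = this
      have xe: "x = sm1 \<odot>\<^bsub>H0\<^esub> y \<oplus>\<^bsub>H0\<^esub> xa a"
        by (rule f_eq[OF x _ fe]) (use y xa in simp)
      have "x \<ominus>\<^bsub>H0\<^esub> xa a = (sm1 \<odot>\<^bsub>H0\<^esub> y \<oplus>\<^bsub>H0\<^esub> xa a) \<ominus>\<^bsub>H0\<^esub> xa a"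
        by (subst xe) (rule refl)
      also have "\<dots> = sm1 \<odot>\<^bsub>H0\<^esub> y" using y xa by (simp add: a_minus_def M0.M.a_assoc M0.M.r_neg)
      finally have "x \<ominus>\<^bsub>H0\<^esub> xa a = sm1 \<odot>\<^bsub>H0\<^esub> y" .
      then have "x \<ominus>\<^bsub>H0\<^esub> xa a \<in> mult_image H0 sm1" using y mi_mem0[OF sm1_c] by simp
      then have "C = Phi a" using Cx M0.M.rcos_eq_iff[OF mi0_sub[OF sm1_c] x xa(1)] by (simp add: Phi_def)
      then show "C \<in> Phi ` Fix" using aF by blast
    qed
  qed
qed

abbreviation "Ks0 \<equiv> mult_image H0 skew_sigma"
abbreviation "Ks1 \<equiv> mult_image H1 skew_sigma"

lemma sig_inj_iff:
  "inj_on (map_mod H0 H1 f skew_sigma) (quot_mod H0 skew_sigma)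
   \<longleftrightarrow> (\<forall>z\<in>carrier H0. f z \<in> Ks1 \<longrightarrow> z \<in> Ks0)"
proof
  assume inj: "inj_on (map_mod H0 H1 f skew_sigma) (quot_mod H0 skew_sigma)"
  show "\<forall>z\<in>carrier H0. f z \<in> Ks1 \<longrightarrow> z \<in> Ks0"
  proof (intro ballI impI)
    fix z assume z: "z \<in> carrier H0" and fz: "f z \<in> Ks1"
    have k1: "Ks1 +>\<^bsub>H1\<^esub> f z = Ks1" using M1.M.rcos_self_K[OF mi1_sub[OF sig_c]] z fz by simp
    have k2: "Ks1 +>\<^bsub>H1\<^esub> \<zero>\<^bsub>H1\<^esub> = Ks1"
      using M1.M.rcos_self_K[OF mi1_sub[OF sig_c]] additive_subgroup.zero_closed[OF mi1_sub[OF sig_c]] by simp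
    have "map_mod H0 H1 f skew_sigma (Ks0 +>\<^bsub>H0\<^esub> z) = map_mod H0 H1 f skew_sigma (Ks0 +>\<^bsub>H0\<^esub> \<zero>\<^bsub>H0\<^esub>)"
      using z by (simp add: map_mod_coset k1 k2)
    then have "Ks0 +>\<^bsub>H0\<^esub> z = Ks0 +>\<^bsub>H0\<^esub> \<zero>\<^bsub>H0\<^esub>"
      using inj z by (elim inj_onD) (auto simp: quot_mod_iff0)
    then show "z \<in> Ks0" using M0.M.rcos_self_K[OF mi0_sub[OF sig_c]] z
      by (metis M0.M.rcos_self_K M0.M.zero_closed M0.mult_image_subgroup additive_subgroup.zero_closed sig_c)
  qed
next
  assume H: "\<forall>z\<in>carrier H0. f z \<in> Ks1 \<longrightarrow> z \<in> Ks0"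
  show "inj_on (map_mod H0 H1 f skew_sigma) (quot_mod H0 skew_sigma)"
  proof (rule inj_onI)
    fix C C' assume C: "C \<in> quot_mod H0 skew_sigma" and C': "C' \<in> quot_mod H0 skew_sigma"
      and e: "map_mod H0 H1 f skew_sigma C = map_mod H0 H1 f skew_sigma C'"
    obtain x where x: "x \<in> carrier H0" "C = Ks0 +>\<^bsub>H0\<^esub> x" using C by (auto simp: quot_mod_iff0)
    obtain x' where x': "x' \<in> carrier H0" "C' = Ks0 +>\<^bsub>H0\<^esub> x'" using C' by (auto simp: quot_mod_iff0)
    have "Ks1 +>\<^bsub>H1\<^esub> f x = Ks1 +>\<^bsub>H1\<^esub> f x'" using e x x' by (simp add: map_mod_coset)
    then have "f x \<ominus>\<^bsub>H1\<^esub> f x' \<in> Ks1" using M1.M.rcos_eq_iff[OF mi1_sub[OF sig_c]] x x' by simp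
    then have "f (x \<ominus>\<^bsub>H0\<^esub> x') \<in> Ks1" using x x' by (simp add: f_diff)
    then have "x \<ominus>\<^bsub>H0\<^esub> x' \<in> Ks0" using H x x' by simp
    then show "C = C'" using M0.M.rcos_eq_iff[OF mi0_sub[OF sig_c]] x x' by simp
  qed
qed

lemma sig_inj_S:
  "(\<forall>z\<in>carrier H0. f z \<in> Ks1 \<longrightarrow> z \<in> Ks0) \<longleftrightarrow> (\<forall>a\<in>V0. S a = 0 \<longrightarrow> a = 0)"
proof
  assume H: "\<forall>z\<in>carrier H0. f z \<in> Ks1 \<longrightarrow> z \<in> Ks0"
  show "\<forall>a\<in>V0. S a = 0 \<longrightarrow> a = 0"
  proof (intro ballI impI)
    fix a assume a: "a \<in> V0" and Sa: "S a = 0"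
    have "skew_sigma \<odot>\<^bsub>H1\<^esub> lin a \<in> f ` carrier H0"
      using Sa pi_zero_iff[of "skew_sigma \<odot>\<^bsub>H1\<^esub> lin a"] by (simp add: S_def)
    then obtain z where z: "z \<in> carrier H0" "f z = skew_sigma \<odot>\<^bsub>H1\<^esub> lin a" by auto
    then have "z \<in> Ks0" using H mi_mem[OF sig_c lin_closed] by auto
    then obtain y where y: "y \<in> carrier H0" "z = skew_sigma \<odot>\<^bsub>H0\<^esub> y" by (auto simp: mult_image_def)
    have "skew_sigma \<odot>\<^bsub>H1\<^esub> (lin a \<ominus>\<^bsub>H1\<^esub> f y) = \<zero>\<^bsub>H1\<^esub>"
      using z y by (simp add: M1.smult_diff f_smult M1.M.ag_diff_self)
    note z = this
    have c1: "lin a \<ominus>\<^bsub>H1\<^esub> f y \<in> carrier H1" using y(1) by simp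
    have "lin a \<ominus>\<^bsub>H1\<^esub> f y = \<zero>\<^bsub>H1\<^esub>" by (rule sigma_inj1[OF c1 z])
    then have "lin a = f y" by (rule M1.M.ag_diff_eq0[rotated 2]) (use y(1) in simp_all)
    then have "trunc a = 0" using y pi_lin pi_f by metis
    then show "a = 0" using a by (simp add: trunc_id)
  qed
next
  assume H: "\<forall>a\<in>V0. S a = 0 \<longrightarrow> a = 0"
  show "\<forall>z\<in>carrier H0. f z \<in> Ks1 \<longrightarrow> z \<in> Ks0"
  proof (intro ballI impI)
    fix z assume z: "z \<in> carrier H0" and fz: "f z \<in> Ks1"
    then obtain h where h: "h \<in> carrier H1" "f z = skew_sigma \<odot>\<^bsub>H1\<^esub> h" by (auto simp: mult_image_def)
    have "S (pi h) = 0" using pi_sigma[OF h(1)] h(2) pi_f[OF z] by simp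
    then have "pi h = 0" using H pi_V0 by blast
    then obtain y where y: "y \<in> carrier H0" "h = f y" using pi_zero_iff[OF h(1)] by auto
    have "f z = f (skew_sigma \<odot>\<^bsub>H0\<^esub> y)" using h y by (simp add: f_smult)
    note fe = this
    have "z = skew_sigma \<odot>\<^bsub>H0\<^esub> y" by (rule f_eq[OF z(1) _ fe]) (use y in simp)
    then show "z \<in> Ks0" using y mi_mem0[OF sig_c] by simp
  qed
qed

lemma sig_surj_iff:
  "map_mod H0 H1 f skew_sigma ` quot_mod H0 skew_sigma = quot_mod H1 skew_sigma
   \<longleftrightarrow> (\<forall>h\<in>carrier H1. \<exists>x\<in>carrier H0. h \<ominus>\<^bsub>H1\<^esub> f x \<in> Ks1)"
proof
  assume e: "map_mod H0 H1 f skew_sigma ` quot_mod H0 skew_sigma = quot_mod H1 skew_sigma"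
  show "\<forall>h\<in>carrier H1. \<exists>x\<in>carrier H0. h \<ominus>\<^bsub>H1\<^esub> f x \<in> Ks1"
  proof
    fix h assume h: "h \<in> carrier H1"
    have "Ks1 +>\<^bsub>H1\<^esub> h \<in> quot_mod H1 skew_sigma" using h by (auto simp: quot_mod_iff1)
    then obtain C where C: "C \<in> quot_mod H0 skew_sigma" "Ks1 +>\<^bsub>H1\<^esub> h = map_mod H0 H1 f skew_sigma C"
      using e by (metis imageE)
    obtain x where x: "x \<in> carrier H0" "C = Ks0 +>\<^bsub>H0\<^esub> x" using C(1) by (auto simp: quot_mod_iff0)
    have "Ks1 +>\<^bsub>H1\<^esub> h = Ks1 +>\<^bsub>H1\<^esub> f x" using C(2) x by (simp add: map_mod_coset)
    then have "h \<ominus>\<^bsub>H1\<^esub> f x \<in> Ks1" using M1.M.rcos_eq_iff[OF mi1_sub[OF sig_c]] h x by simp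
    then show "\<exists>x\<in>carrier H0. h \<ominus>\<^bsub>H1\<^esub> f x \<in> Ks1" using x by blast
  qed
next
  assume H: "\<forall>h\<in>carrier H1. \<exists>x\<in>carrier H0. h \<ominus>\<^bsub>H1\<^esub> f x \<in> Ks1"
  show "map_mod H0 H1 f skew_sigma ` quot_mod H0 skew_sigma = quot_mod H1 skew_sigma"
  proof
    show "map_mod H0 H1 f skew_sigma ` quot_mod H0 skew_sigma \<subseteq> quot_mod H1 skew_sigma"
    proof
      fix D assume "D \<in> map_mod H0 H1 f skew_sigma ` quot_mod H0 skew_sigma"
      then obtain x where x: "x \<in> carrier H0" "D = map_mod H0 H1 f skew_sigma (Ks0 +>\<^bsub>H0\<^esub> x)"
        by (auto simp: quot_mod_iff0)
      then have "D = Ks1 +>\<^bsub>H1\<^esub> f x" by (simp add: map_mod_coset)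
      then show "D \<in> quot_mod H1 skew_sigma" using x unfolding quot_mod_iff1 by blast
    qed
  next
    show "quot_mod H1 skew_sigma \<subseteq> map_mod H0 H1 f skew_sigma ` quot_mod H0 skew_sigma"
    proof
      fix D assume "D \<in> quot_mod H1 skew_sigma"
      then obtain h where h: "h \<in> carrier H1" "D = Ks1 +>\<^bsub>H1\<^esub> h" by (auto simp: quot_mod_iff1)
      obtain x where x: "x \<in> carrier H0" "h \<ominus>\<^bsub>H1\<^esub> f x \<in> Ks1" using H h by blast
      have "D = map_mod H0 H1 f skew_sigma (Ks0 +>\<^bsub>H0\<^esub> x)"
        using h x M1.M.rcos_eq_iff[OF mi1_sub[OF sig_c]] by (simp add: map_mod_coset)
      moreover have "Ks0 +>\<^bsub>H0\<^esub> x \<in> quot_mod H0 skew_sigma" using x by (auto simp: quot_mod_iff0)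
      ultimately show "D \<in> map_mod H0 H1 f skew_sigma ` quot_mod H0 skew_sigma" by blast
    qed
  qed
qed

lemma sig_surj_S:
  "(\<forall>h\<in>carrier H1. \<exists>x\<in>carrier H0. h \<ominus>\<^bsub>H1\<^esub> f x \<in> Ks1) \<longleftrightarrow> (\<forall>b\<in>V0. \<exists>a\<in>V0. S a = b)"
proof
  assume H: "\<forall>h\<in>carrier H1. \<exists>x\<in>carrier H0. h \<ominus>\<^bsub>H1\<^esub> f x \<in> Ks1"
  show "\<forall>b\<in>V0. \<exists>a\<in>V0. S a = b"
  proof
    fix b assume b: "b \<in> V0"
    obtain x where x: "x \<in> carrier H0" "lin b \<ominus>\<^bsub>H1\<^esub> f x \<in> Ks1" using H lin_closed by blast
    then obtain g where g: "g \<in> carrier H1" "lin b \<ominus>\<^bsub>H1\<^esub> f x = skew_sigma \<odot>\<^bsub>H1\<^esub> g"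
      by (auto simp: mult_image_def)
    have "pi (lin b \<ominus>\<^bsub>H1\<^esub> f x) = b" using x b by (simp add: pi_diff pi_lin pi_f trunc_id)
    then have "S (pi g) = b" using g pi_sigma by simp
    then show "\<exists>a\<in>V0. S a = b" using pi_V0 by blast
  qed
next
  assume H: "\<forall>b\<in>V0. \<exists>a\<in>V0. S a = b"
  show "\<forall>h\<in>carrier H1. \<exists>x\<in>carrier H0. h \<ominus>\<^bsub>H1\<^esub> f x \<in> Ks1"
  proof
    fix h assume h: "h \<in> carrier H1"
    obtain a where a: "a \<in> V0" "S a = pi h" using H pi_V0 by blast
    have "pi h = pi (skew_sigma \<odot>\<^bsub>H1\<^esub> lin a)" using a by (simp add: S_def)
    then have "h \<ominus>\<^bsub>H1\<^esub> skew_sigma \<odot>\<^bsub>H1\<^esub> lin a \<in> f ` carrier H0"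
      using h pi_eq_iff by simp
    then obtain x where x: "x \<in> carrier H0" "h \<ominus>\<^bsub>H1\<^esub> skew_sigma \<odot>\<^bsub>H1\<^esub> lin a = f x" by auto
    have "h \<ominus>\<^bsub>H1\<^esub> f x = skew_sigma \<odot>\<^bsub>H1\<^esub> lin a"
      by (rule M1.M.ag_diff_swap[OF h _ x(2)]) simp
    then have "h \<ominus>\<^bsub>H1\<^esub> f x \<in> Ks1" using mi_mem[OF sig_c lin_closed, of a] by simp
    then show "\<exists>x\<in>carrier H0. h \<ominus>\<^bsub>H1\<^esub> f x \<in> Ks1" using x(1) by blast
  qed
qed

lemma sig_bij_S:
  "bij_betw (map_mod H0 H1 f skew_sigma) (quot_mod H0 skew_sigma) (quot_mod H1 skew_sigma)
   \<longleftrightarrow> (\<forall>a\<in>V0. S a = 0 \<longrightarrow> a = 0) \<and> (\<forall>b\<in>V0. \<exists>a\<in>V0. S a = b)"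
  unfolding bij_betw_def sig_inj_iff sig_inj_S sig_surj_iff sig_surj_S ..

end

lemma sum_fun_apply: "(sum F A) i = (\<Sum>x\<in>A. F x i)"
  for F :: "'b \<Rightarrow> nat \<Rightarrow> 'a::comm_monoid_add"
  by (induction A rule: infinite_finite_induct) auto

lemma sc_apply [simp]: "sc c a i = c * a i" by (simp add: sc_def)

interpretation VS: vector_space "sc :: 'a::field \<Rightarrow> (nat \<Rightarrow> 'a) \<Rightarrow> (nat \<Rightarrow> 'a)"
  by unfold_locales (auto simp: sc_def fun_eq_iff algebra_simps)

definition Vn :: "nat \<Rightarrow> (nat \<Rightarrow> 'a::field) set" where "Vn n = {a. \<forall>i\<ge>n. a i = 0}"
definition dl :: "nat \<Rightarrow> nat \<Rightarrow> 'a::field" where "dl i = (\<lambda>j. if j = i then 1 else 0)"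

lemma Vn_subspace: "VS.subspace (Vn n :: (nat \<Rightarrow> 'a::field) set)"
  unfolding VS.subspace_def Vn_def by (auto simp: sc_def)

lemma dl_Vn: "i < n \<Longrightarrow> (dl i :: nat \<Rightarrow> 'a::field) \<in> Vn n"
  by (auto simp: dl_def Vn_def)

lemma dl_inj: "inj (dl :: nat \<Rightarrow> nat \<Rightarrow> 'a::field)"
proof (rule injI)
  fix i j assume "(dl i :: nat \<Rightarrow> 'a) = dl j"
  then have "(dl i :: nat \<Rightarrow> 'a) i = dl j i" by simp
  then show "i = j" by (auto simp: dl_def split: if_splits)
qed

lemma Vn_sum_dl: "a \<in> Vn n \<Longrightarrow> a = (\<Sum>i<n. sc (a i) (dl i))"
proof
  fix j assume a: "a \<in> Vn n"
  have "(\<Sum>i<n. sc (a i) (dl i)) j = (\<Sum>i<n. a i * dl i j)" by (simp add: sum_fun_apply)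
  also have "\<dots> = (if j < n then a j else 0)"
    by (auto simp: dl_def if_distrib cong: if_cong)
  also have "\<dots> = a j" using a by (auto simp: Vn_def)
  finally show "a j = (\<Sum>i<n. sc (a i) (dl i)) j" by simp
qed

lemma Vn_span: "Vn n \<subseteq> VS.span (dl ` {..<n} :: (nat \<Rightarrow> 'a::field) set)"
proof
  fix a :: "nat \<Rightarrow> 'a" assume a: "a \<in> Vn n"
  have "(\<Sum>i<n. sc (a i) (dl i)) \<in> VS.span (dl ` {..<n})"
    by (intro VS.span_sum VS.span_scale VS.span_base) auto
  then show "a \<in> VS.span (dl ` {..<n})" using Vn_sum_dl[OF a] by simp
qed

lemma dl_indep: "VS.independent (dl ` {..<n} :: (nat \<Rightarrow> 'a::field) set)"
proof (rule VS.independent_if_scalars_zero)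
  show "finite (dl ` {..<n} :: (nat \<Rightarrow> 'a) set)" by simp
  fix g :: "(nat \<Rightarrow> 'a) \<Rightarrow> 'a" and x :: "nat \<Rightarrow> 'a"
  assume s: "(\<Sum>x\<in>dl ` {..<n}. sc (g x) x) = 0" and x: "x \<in> dl ` {..<n}"
  then obtain i where i: "i < n" "x = dl i" by auto
  have "0 = (\<Sum>x\<in>dl ` {..<n}. sc (g x) x) i" using s by simp
  also have "\<dots> = (\<Sum>j<n. g (dl j) * dl j i)"
    by (simp add: sum_fun_apply sum.reindex[OF inj_on_subset[OF dl_inj]])
  also have "\<dots> = g (dl i)" using i by (auto simp: dl_def if_distrib cong: if_cong)
  finally show "g x = 0" using i by simp
qed

lemma card_dl: "card (dl ` {..<n} :: (nat \<Rightarrow> 'a::field) set) = n"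
  by (simp add: card_image[OF inj_on_subset[OF dl_inj]])

lemma indep_bound: "B \<subseteq> Vn n \<Longrightarrow> VS.independent B \<Longrightarrow> finite B \<and> card B \<le> n"
  for B :: "(nat \<Rightarrow> 'a::field) set"
proof -
  assume B: "B \<subseteq> Vn n" and ind: "VS.independent B"
  have "B \<subseteq> VS.span (dl ` {..<n})" using Vn_span B by blast
  from VS.independent_span_bound[OF finite_imageI[OF finite_lessThan] ind this]
  show ?thesis using card_dl[of n, where 'a='a] by simp
qed

lemma span_Vn: "B \<subseteq> Vn n \<Longrightarrow> VS.span B \<subseteq> Vn n"
  by (rule VS.span_minimal[OF _ Vn_subspace])

locale lang = fqc q phi for q :: nat and phi :: "'a::field \<Rightarrow> 'a" +
  fixes n :: nat and S :: "(nat \<Rightarrow> 'a) \<Rightarrow> (nat \<Rightarrow> 'a)"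
  assumes S_V: "a \<in> Vn n \<Longrightarrow> S a \<in> Vn n"
    and S_add: "a \<in> Vn n \<Longrightarrow> b \<in> Vn n \<Longrightarrow> S (a + b) = S a + S b"
    and S_sc: "a \<in> Vn n \<Longrightarrow> S (sc c a) = sc (phi c) (S a)"
begin

abbreviation "V \<equiv> (Vn n :: (nat \<Rightarrow> 'a) set)"

lemma V_add: "a \<in> V \<Longrightarrow> b \<in> V \<Longrightarrow> a + b \<in> V" using Vn_subspace VS.subspace_add by blast
lemma V_sc: "a \<in> V \<Longrightarrow> sc c a \<in> V" using Vn_subspace VS.subspace_scale by blast
lemma V_zero: "0 \<in> V" using Vn_subspace VS.subspace_0 by blast
lemma V_diff: "a \<in> V \<Longrightarrow> b \<in> V \<Longrightarrow> a - b \<in> V" using Vn_subspace VS.subspace_diff by blast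
lemma V_sum: "(\<And>i. i \<in> A \<Longrightarrow> v i \<in> V) \<Longrightarrow> (\<Sum>i\<in>A. sc (c i) (v i)) \<in> V"
  using Vn_subspace by (intro VS.subspace_sum) (auto intro: V_sc)

lemma S_zero: "S 0 = 0"
proof -
  have z: "sc 0 (0::nat \<Rightarrow> 'a) = 0" by (simp add: sc_def fun_eq_iff)
  have "S 0 = S (sc 0 0)" by (simp only: z)
  also have "\<dots> = sc (phi 0) (S 0)" by (rule S_sc[OF V_zero])
  also have "\<dots> = 0" by (simp add: sc_def fun_eq_iff)
  finally show ?thesis .
qed

lemma sc_m1: "sc (-1) a = - a" by (simp add: sc_def fun_eq_iff)

lemma S_neg: "a \<in> V \<Longrightarrow> S (- a) = - S a"
  using S_sc[of a "-1"] by (simp add: sc_m1 phi_minus)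

lemma S_diff: "a \<in> V \<Longrightarrow> b \<in> V \<Longrightarrow> S (a - b) = S a - S b"
  using S_add[of a "- b"] S_neg[of b] V_sc[of b "-1"] by (simp add: sc_m1)

lemma S_sum:
  assumes "finite A" "\<And>i. i \<in> A \<Longrightarrow> v i \<in> V"
  shows "S (\<Sum>i\<in>A. sc (c i) (v i)) = (\<Sum>i\<in>A. sc (phi (c i)) (S (v i)))"
  using assms
proof (induction A rule: finite_induct)
  case empty then show ?case by (simp only: sum.empty S_zero)
next
  case (insert x F)
  have "S (\<Sum>i\<in>insert x F. sc (c i) (v i)) = S (sc (c x) (v x) + (\<Sum>i\<in>F. sc (c i) (v i)))"
    by (simp only: sum.insert[OF insert(1,2)])
  also have "\<dots> = S (sc (c x) (v x)) + S (\<Sum>i\<in>F. sc (c i) (v i))"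
    using insert by (intro S_add V_sc V_sum) auto
  also have "\<dots> = sc (phi (c x)) (S (v x)) + (\<Sum>i\<in>F. sc (phi (c i)) (S (v i)))"
    using insert(3,4) by (simp only: S_sc insert_iff simp_thms)
  also have "\<dots> = (\<Sum>i\<in>insert x F. sc (phi (c i)) (S (v i)))"
    by (simp only: sum.insert[OF insert(1,2)])
  finally show ?case .
qed

lemma S_inj_iff: "(\<forall>a\<in>V. S a = 0 \<longrightarrow> a = 0) \<Longrightarrow> a \<in> V \<Longrightarrow> b \<in> V \<Longrightarrow> S a = S b \<Longrightarrow> a = b"
  using S_diff[of a b] V_diff[of a b] by auto

definition Fx :: "(nat \<Rightarrow> 'a) set" where "Fx = {a \<in> V. S a = a}"

definition BB :: "(nat \<Rightarrow> 'a) set" where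
  "BB = (SOME B. B \<subseteq> Fx \<and> VS.independent B \<and> Fx \<subseteq> VS.span B)"

lemma BB_prop: "BB \<subseteq> Fx \<and> VS.independent BB \<and> Fx \<subseteq> VS.span BB"
proof -
  obtain B where "B \<subseteq> Fx" "VS.independent B" "Fx \<subseteq> VS.span B"
    using VS.maximal_independent_subset[of Fx] by blast
  then show ?thesis unfolding BB_def by (rule someI[where P = "\<lambda>B. B \<subseteq> Fx \<and> VS.independent B \<and> Fx \<subseteq> VS.span B", OF conjI[OF _ conjI]])
qed

lemma BB_Fx: "BB \<subseteq> Fx" using BB_prop by blast
lemma BB_V: "BB \<subseteq> V" using BB_Fx by (auto simp: Fx_def)
lemma BB_indep: "VS.independent BB" using BB_prop by blast
lemma Fx_span: "Fx \<subseteq> VS.span BB" using BB_prop by blast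
lemma BB_fin: "finite BB" and BB_card: "card BB \<le> n"
  using indep_bound[OF BB_V BB_indep] by auto
lemma BB_fix: "u \<in> BB \<Longrightarrow> S u = u" using BB_Fx by (auto simp: Fx_def)
lemma spanBB_V: "VS.span BB \<subseteq> V" by (rule span_Vn[OF BB_V])

lemma spanBB_repr: "x \<in> VS.span BB \<Longrightarrow> \<exists>c. x = (\<Sum>u\<in>BB. sc (c u) u)"
  using VS.span_finite[OF BB_fin] by auto

lemma sumBB_span: "(\<Sum>u\<in>BB. sc (c u) u) \<in> VS.span BB"
  by (intro VS.span_sum VS.span_scale VS.span_base)

lemma BB_uniq:
  assumes e: "(\<Sum>u\<in>BB. sc (c u) u) = (\<Sum>u\<in>BB. sc (d u) u)" and u: "u \<in> BB"
  shows "c u = d u"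
proof -
  have "(\<Sum>u\<in>BB. sc (c u - d u) u) = (\<Sum>u\<in>BB. sc (c u) u) - (\<Sum>u\<in>BB. sc (d u) u)"
    by (simp add: VS.scale_left_diff_distrib sum_subtractf)
  also have "\<dots> = 0" using e by simp
  finally have "(\<Sum>u\<in>BB. sc (c u - d u) u) = 0" .
  then have "c u - d u = 0" using VS.independentD[OF BB_indep BB_fin subset_refl, of "\<lambda>w. c w - d w" u] u by blast
  then show ?thesis by simp
qed

lemma S_sumBB: "S (\<Sum>u\<in>BB. sc (c u) u) = (\<Sum>u\<in>BB. sc (phi (c u)) u)"
  using S_sum[OF BB_fin, of "\<lambda>u. u" c] BB_V BB_fix by auto

lemma Fx_eq: "Fx = (\<lambda>c. \<Sum>u\<in>BB. sc (c u) u) ` (BB \<rightarrow>\<^sub>E Fq q)"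
proof
  show "Fx \<subseteq> (\<lambda>c. \<Sum>u\<in>BB. sc (c u) u) ` (BB \<rightarrow>\<^sub>E Fq q)"
  proof
    fix x assume x: "x \<in> Fx"
    obtain c where c: "x = (\<Sum>u\<in>BB. sc (c u) u)" using spanBB_repr Fx_span x by blast
    have "(\<Sum>u\<in>BB. sc (phi (c u)) u) = (\<Sum>u\<in>BB. sc (c u) u)"
      using x c S_sumBB by (simp add: Fx_def)
    then have fixc: "\<And>u. u \<in> BB \<Longrightarrow> phi (c u) = c u" using BB_uniq[of "\<lambda>u. phi (c u)" c] by blast
    define c' where "c' = restrict c BB"
    have "c' \<in> BB \<rightarrow>\<^sub>E Fq q" using fixc by (auto simp: c'_def Fq_def phi_fix_iff)
    moreover have "x = (\<Sum>u\<in>BB. sc (c' u) u)" using c by (simp add: c'_def)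
    ultimately show "x \<in> (\<lambda>c. \<Sum>u\<in>BB. sc (c u) u) ` (BB \<rightarrow>\<^sub>E Fq q)" by blast
  qed
next
  show "(\<lambda>c. \<Sum>u\<in>BB. sc (c u) u) ` (BB \<rightarrow>\<^sub>E Fq q) \<subseteq> Fx"
  proof
    fix x assume "x \<in> (\<lambda>c. \<Sum>u\<in>BB. sc (c u) u) ` (BB \<rightarrow>\<^sub>E Fq q)"
    then obtain c where c: "c \<in> BB \<rightarrow>\<^sub>E Fq q" "x = (\<Sum>u\<in>BB. sc (c u) u)" by blast
    have "x \<in> V" unfolding c(2) by (rule subsetD[OF spanBB_V sumBB_span])
    moreover have "S x = x"
    proof -
      have "\<And>u. u \<in> BB \<Longrightarrow> phi (c u) = c u" using c(1) by (auto simp: Fq_def phi_fix_iff)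
      then show ?thesis using c(2) S_sumBB by simp
    qed
    ultimately show "x \<in> Fx" by (simp add: Fx_def)
  qed
qed

lemma card_Fx: "finite Fx \<and> card Fx = q ^ card BB"
proof -
  have inj: "inj_on (\<lambda>c. \<Sum>u\<in>BB. sc (c u) u) (BB \<rightarrow>\<^sub>E Fq q)"
  proof (rule inj_onI)
    fix c d assume c: "c \<in> BB \<rightarrow>\<^sub>E Fq q" and d: "d \<in> BB \<rightarrow>\<^sub>E Fq q"
      and e: "(\<Sum>u\<in>BB. sc (c u) u) = (\<Sum>u\<in>BB. sc (d u) u)"
    show "c = d"
    proof (rule PiE_ext[OF c d])
      fix u assume "u \<in> BB" then show "c u = d u" using BB_uniq e by blast
    qed
  qed
  have fq: "finite (Fq q :: 'a set)" using card_Fq by simp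
  have fin: "finite (BB \<rightarrow>\<^sub>E (Fq q :: 'a set))" by (rule finite_PiE[OF BB_fin]) (rule fq)
  have "card Fx = card (BB \<rightarrow>\<^sub>E (Fq q :: 'a set))" unfolding Fx_eq by (rule card_image[OF inj])
  also have "\<dots> = q ^ card BB" using BB_fin card_Fq by (simp add: card_PiE)
  finally show ?thesis using fin Fx_eq by simp
qed

lemma cardBB_iff: "card BB = n \<longleftrightarrow> V \<subseteq> VS.span BB"
proof
  assume cB: "card BB = n"
  show "V \<subseteq> VS.span BB"
  proof (rule ccontr)
    assume "\<not> V \<subseteq> VS.span BB"
    then obtain a where a: "a \<in> V" "a \<notin> VS.span BB" by blast
    have aB: "a \<notin> BB" using a VS.span_base by blast
    have ind: "VS.independent (insert a BB)" using BB_indep a aB by (simp add: VS.independent_insert)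
    have "card (insert a BB) = Suc n" using cB BB_fin aB by simp
    moreover have "card (insert a BB) \<le> n" using indep_bound[OF _ ind] a BB_V by auto
    ultimately show False by simp
  qed
next
  assume sp: "V \<subseteq> VS.span BB"
  have "dl ` {..<n} \<subseteq> VS.span BB" using sp dl_Vn by blast
  then have "card (dl ` {..<n} :: (nat \<Rightarrow> 'a) set) \<le> card BB"
    using VS.independent_span_bound[OF BB_fin dl_indep] by blast
  then show "card BB = n" using card_dl[of n, where 'a='a] BB_card by simp
qed

lemma span_imp_bij:
  assumes sp: "V \<subseteq> VS.span BB"
  shows "(\<forall>a\<in>V. S a = 0 \<longrightarrow> a = 0) \<and> (\<forall>b\<in>V. \<exists>a\<in>V. S a = b)"
proof
  show "\<forall>a\<in>V. S a = 0 \<longrightarrow> a = 0"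
  proof (intro ballI impI)
    fix a assume a: "a \<in> V" and Sa: "S a = 0"
    have "a \<in> VS.span BB" using sp a by (rule subsetD)
    then obtain c where c: "a = (\<Sum>u\<in>BB. sc (c u) u)" using spanBB_repr by blast
    have "S a = (\<Sum>u\<in>BB. sc (phi (c u)) u)" unfolding c by (rule S_sumBB)
    then have e: "(\<Sum>u\<in>BB. sc (phi (c u)) u) = (\<Sum>u\<in>BB. sc ((\<lambda>u. 0) u) u)"
      using Sa by simp
    have cz: "\<And>u. u \<in> BB \<Longrightarrow> c u = 0"
    proof -
      fix u assume u: "u \<in> BB"
      have "phi (c u) = 0" using BB_uniq[OF e u] by simp
      then show "c u = 0" by simp
    qed
    have "(\<Sum>u\<in>BB. sc (c u) u) = (\<Sum>u\<in>BB. sc 0 u)"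
      by (rule sum.cong) (simp_all add: cz)
    then show "a = 0" using c by simp
  qed
next
  show "\<forall>b\<in>V. \<exists>a\<in>V. S a = b"
  proof
    fix b assume b: "b \<in> V"
    have "b \<in> VS.span BB" using sp b by (rule subsetD)
    then obtain c where c: "b = (\<Sum>u\<in>BB. sc (c u) u)" using spanBB_repr by blast
    have "S (\<Sum>u\<in>BB. sc (c u ^ q) u) = (\<Sum>u\<in>BB. sc (phi (c u ^ q)) u)" by (rule S_sumBB)
    also have "\<dots> = b" unfolding c by (simp only: phi_of_pow)
    finally have "S (\<Sum>u\<in>BB. sc (c u ^ q) u) = b" .
    moreover have "(\<Sum>u\<in>BB. sc (c u ^ q) u) \<in> V" by (rule subsetD[OF spanBB_V sumBB_span])
    ultimately show "\<exists>a\<in>V. S a = b" by blast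
  qed
qed

end

primrec Ypol :: "nat \<Rightarrow> (nat \<Rightarrow> 'a::field) \<Rightarrow> nat \<Rightarrow> 'a poly" where
  "Ypol q c 0 = smult (c 0) (monom 1 q)"
| "Ypol q c (Suc i) = (Ypol q c i) ^ q + smult (c (Suc i)) (monom 1 q)"

context fqc
begin

lemma monom_split: "monom (1::'a) q = monom 1 2 * monom 1 (q - 2)"
proof -
  have e: "2 + (q - 2) = q" using q_ge2 by simp
  have "monom (1::'a) 2 * monom 1 (q - 2) = monom 1 (2 + (q - 2))" by (simp only: mult_monom mult_1)
  then show ?thesis by (simp only: e)
qed

lemma Ypol_deg: "c 0 \<noteq> 0 \<Longrightarrow> degree (Ypol q c i :: 'a poly) = q ^ Suc i"
proof (induction i)
  case 0 then show ?case by (simp add: degree_monom_eq)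
next
  case (Suc i)
  have ne: "Ypol q c i \<noteq> 0" using Suc q_pos by (metis degree_0 power_not_zero zero_less_iff_neq_zero)
  have d1: "degree ((Ypol q c i) ^ q) = q ^ Suc (Suc i)"
    using Suc ne by (simp add: degree_power_eq)
  have "degree (smult (c (Suc i)) (monom (1::'a) q)) \<le> q" by (simp add: degree_monom_le)
  also have "q < q ^ Suc (Suc i)"
  proof -
    have "q ^ 1 < q ^ Suc (Suc i)" using q_ge2 by (intro power_strict_increasing) auto
    then show ?thesis by simp
  qed
  finally have "degree (smult (c (Suc i)) (monom (1::'a) q)) < degree ((Ypol q c i) ^ q)" using d1 by simp
  then show ?case using d1 by (simp add: degree_add_eq_left)
qed

lemma Ypol_dvd: "monom (1::'a) 2 dvd Ypol q c i"
proof (induction i)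
  case 0
  note monom_split
  then show ?case by (simp add: dvd_smult)
next
  case (Suc i)
  note monom_split
  then have a: "monom (1::'a) 2 dvd smult (c (Suc i)) (monom 1 q)" by (simp add: dvd_smult)
  have "Ypol q c i dvd (Ypol q c i) ^ q" using q_pos by simp
  then have b: "monom (1::'a) 2 dvd (Ypol q c i) ^ q" using Suc dvd_trans by blast
  show ?case using a b by simp
qed

lemma Ypol_root:
  assumes c0: "c 0 \<noteq> 0"
  shows "\<exists>z::'a. z \<noteq> 0 \<and> poly (Ypol q c m) z = z"
proof -
  obtain G where G: "Ypol q c m = monom 1 2 * G" using Ypol_dvd by (meson dvdE)
  have dY: "degree (Ypol q c m) = q ^ Suc m" using Ypol_deg[of c m, OF c0] .
  have qm: "q ^ Suc m \<ge> 2"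
  proof -
    have "1 \<le> q ^ m" using q_pos by simp
    then have a: "q * 1 \<le> q * q ^ m" by (rule mult_le_mono2)
    have "q ^ Suc m = q * q ^ m" by simp
    then show ?thesis using q_ge2 a by linarith
  qed
  have G0: "G \<noteq> 0" using G dY qm by auto
  have dG: "degree (Ypol q c m) = 2 + degree G" using G G0 by (simp add: degree_mult_eq degree_monom_eq)
  let ?R = "monom (1::'a) 1 * G - 1"
  have dXG: "degree (monom (1::'a) 1 * G) = 1 + degree G" using G0 by (simp add: degree_mult_eq degree_monom_eq)
  have "degree ?R = degree (monom (1::'a) 1 * G + - 1)" by simp
  also have "\<dots> = degree (monom (1::'a) 1 * G)" using dXG by (intro degree_add_eq_left) simp
  finally have "degree ?R > 0" using dXG by simp
  then obtain r where r: "poly ?R r = 0" using alg_closed by blast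
  then have rG: "r * poly G r = 1" by (simp add: poly_monom)
  then have "r \<noteq> 0" by auto
  moreover have "poly (Ypol q c m) r = r"
    using rG by (simp add: G poly_monom power2_eq_square algebra_simps)
  ultimately show ?thesis by blast
qed

lemma Ypol_seq:
  assumes c0: "c 0 \<noteq> 0"
  shows "\<exists>z y. (z::'a) \<noteq> 0 \<and> y 0 = c 0 * z ^ q \<and> (\<forall>i. y (Suc i) = y i ^ q + c (Suc i) * z ^ q) \<and> y m = z"
proof -
  obtain z where z: "z \<noteq> 0" "poly (Ypol q c m) z = z" using Ypol_root[of c m, OF c0] by blast
  define y where "y i = poly (Ypol q c i) z" for i
  have "y 0 = c 0 * z ^ q" by (simp add: y_def poly_monom)
  moreover have "\<forall>i. y (Suc i) = y i ^ q + c (Suc i) * z ^ q" by (simp add: y_def poly_monom)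
  moreover have "y m = z" using z by (simp add: y_def)
  ultimately show ?thesis using z by blast
qed

end

lemma span_image_repr:
  assumes "finite A"
  shows "VS.span (v ` A) \<subseteq> range (\<lambda>c. \<Sum>i\<in>A. sc (c i) (v i))"
proof (rule VS.span_minimal)
  show "v ` A \<subseteq> range (\<lambda>c. \<Sum>i\<in>A. sc (c i) (v i))"
  proof
    fix x assume "x \<in> v ` A"
    then obtain j where j: "j \<in> A" "x = v j" by blast
    have "(\<Sum>i\<in>A. sc (if i = j then 1 else 0) (v i)) = (\<Sum>i\<in>{j}. sc (if i = j then 1 else 0) (v i))"
      using assms j by (intro sum.mono_neutral_right) (auto simp: sc_def zero_fun_def)
    also have "\<dots> = x" using j by (simp add: sc_def)
    finally have e: "(\<Sum>i\<in>A. sc (if i = j then 1 else 0) (v i)) = x" .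
    show "x \<in> range (\<lambda>c. \<Sum>i\<in>A. sc (c i) (v i))"
      by (rule range_eqI[where x="\<lambda>i. if i = j then 1 else 0"]) (simp only: e)
  qed
next
  show "VS.subspace (range (\<lambda>c. \<Sum>i\<in>A. sc (c i) (v i)))"
  proof (unfold VS.subspace_def, intro conjI ballI allI)
    show "0 \<in> range (\<lambda>c. \<Sum>i\<in>A. sc (c i) (v i))"
    proof
      show "0 = (\<Sum>i\<in>A. sc ((\<lambda>i. 0) i) (v i))" by simp
    qed simp
  next
    fix x y assume "x \<in> range (\<lambda>c. \<Sum>i\<in>A. sc (c i) (v i))" "y \<in> range (\<lambda>c. \<Sum>i\<in>A. sc (c i) (v i))"
    then obtain c d where "x = (\<Sum>i\<in>A. sc (c i) (v i))" "y = (\<Sum>i\<in>A. sc (d i) (v i))" by blast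
    then have "x + y = (\<Sum>i\<in>A. sc ((\<lambda>i. c i + d i) i) (v i))"
      by (simp add: sum.distrib VS.scale_left_distrib)
    then show "x + y \<in> range (\<lambda>c. \<Sum>i\<in>A. sc (c i) (v i))"
      by (intro range_eqI[where x="\<lambda>i. c i + d i"]) simp
  next
    fix k x assume "x \<in> range (\<lambda>c. \<Sum>i\<in>A. sc (c i) (v i))"
    then obtain c where "x = (\<Sum>i\<in>A. sc (c i) (v i))" by blast
    then have "sc k x = (\<Sum>i\<in>A. sc ((\<lambda>i. k * c i) i) (v i))"
      by (simp add: VS.scale_sum_right)
    then show "sc k x \<in> range (\<lambda>c. \<Sum>i\<in>A. sc (c i) (v i))"
      by (intro range_eqI[where x="\<lambda>i. k * c i"]) simp
  qed
qed

locale lang_bij = lang +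
  assumes inj: "\<forall>a\<in>V. S a = 0 \<longrightarrow> a = 0"
    and surj: "\<forall>b\<in>V. \<exists>a\<in>V. S a = b"
begin

definition T :: "(nat \<Rightarrow> 'a) \<Rightarrow> (nat \<Rightarrow> 'a)" where
  "T b = (SOME a. a \<in> V \<and> S a = b)"

lemma T_V: "b \<in> V \<Longrightarrow> T b \<in> V \<and> S (T b) = b"
proof -
  assume b: "b \<in> V"
  then have "\<exists>a. a \<in> V \<and> S a = b" using surj by blast
  then show ?thesis unfolding T_def by (rule someI_ex)
qed

lemma T_in: "b \<in> V \<Longrightarrow> T b \<in> V" using T_V by blast
lemma S_T: "b \<in> V \<Longrightarrow> S (T b) = b" using T_V by blast

lemma S_eq: "a \<in> V \<Longrightarrow> b \<in> V \<Longrightarrow> S a = S b \<Longrightarrow> a = b"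
  by (rule S_inj_iff[OF inj])

lemma T_S: "a \<in> V \<Longrightarrow> T (S a) = a"
proof -
  assume a: "a \<in> V"
  have "S (T (S a)) = S a" by (rule S_T[OF S_V[OF a]])
  then show ?thesis by (rule S_eq[OF T_in[OF S_V[OF a]] a])
qed

lemma T_add: "a \<in> V \<Longrightarrow> b \<in> V \<Longrightarrow> T (a + b) = T a + T b"
proof -
  assume a: "a \<in> V" and b: "b \<in> V"
  have "S (T a + T b) = a + b" using S_add[OF T_in[OF a] T_in[OF b]] S_T[OF a] S_T[OF b] by simp
  also have "\<dots> = S (T (a + b))" using S_T[OF V_add[OF a b]] by simp
  finally have "S (T (a + b)) = S (T a + T b)" by simp
  then show ?thesis by (rule S_eq[OF T_in[OF V_add[OF a b]] V_add[OF T_in[OF a] T_in[OF b]]])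
qed

lemma T_sc: "a \<in> V \<Longrightarrow> T (sc c a) = sc (c ^ q) (T a)"
proof -
  assume a: "a \<in> V"
  have "S (sc (c ^ q) (T a)) = sc c a" using S_sc[OF T_in[OF a]] S_T[OF a] by (simp add: phi_of_pow)
  also have "\<dots> = S (T (sc c a))" using S_T[OF V_sc[OF a]] by simp
  finally have "S (T (sc c a)) = S (sc (c ^ q) (T a))" by simp
  then show ?thesis by (rule S_eq[OF T_in[OF V_sc[OF a]] V_sc[OF T_in[OF a]]])
qed

lemma T_zero: "T 0 = 0"
  using T_S[OF V_zero] S_zero by simp

lemma T_sum:
  assumes "finite A" "\<And>i. i \<in> A \<Longrightarrow> v i \<in> V"
  shows "T (\<Sum>i\<in>A. sc (c i) (v i)) = (\<Sum>i\<in>A. sc (c i ^ q) (T (v i)))"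
  using assms
proof (induction A rule: finite_induct)
  case empty then show ?case by (simp only: sum.empty T_zero)
next
  case (insert x F)
  have "T (\<Sum>i\<in>insert x F. sc (c i) (v i)) = T (sc (c x) (v x) + (\<Sum>i\<in>F. sc (c i) (v i)))"
    by (simp only: sum.insert[OF insert(1,2)])
  also have "\<dots> = T (sc (c x) (v x)) + T (\<Sum>i\<in>F. sc (c i) (v i))"
  proof -
    have v: "\<And>i. i \<in> F \<Longrightarrow> v i \<in> V" using insert(4) by simp
    have vx: "v x \<in> V" using insert(4) by simp
    show ?thesis by (rule T_add[OF V_sc[OF vx] V_sum[OF v]])
  qed
  also have "\<dots> = sc (c x ^ q) (T (v x)) + (\<Sum>i\<in>F. sc (c i ^ q) (T (v i)))"
    using insert(3,4) by (simp only: T_sc insert_iff simp_thms)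
  also have "\<dots> = (\<Sum>i\<in>insert x F. sc (c i ^ q) (T (v i)))"
    by (simp only: sum.insert[OF insert(1,2)])
  finally show ?case .
qed

lemma T_fix: "u \<in> BB \<Longrightarrow> T u = u"
proof -
  assume u: "u \<in> BB"
  have "T (S u) = u" by (rule T_S) (use u BB_V in blast)
  then show ?thesis using BB_fix[OF u] by simp
qed

lemma S_spanBB: "w \<in> VS.span BB \<Longrightarrow> S w \<in> VS.span BB"
proof -
  assume "w \<in> VS.span BB"
  then obtain c where c: "w = (\<Sum>u\<in>BB. sc (c u) u)" using spanBB_repr by blast
  have "S w = (\<Sum>u\<in>BB. sc (phi (c u)) u)" unfolding c by (rule S_sumBB)
  then show ?thesis by (simp add: sumBB_span)
qed


declare sc_apply [simp del]

lemma lang_span: "V \<subseteq> VS.span BB"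
proof (rule ccontr)
  assume "\<not> V \<subseteq> VS.span BB"
  then obtain e where e: "e \<in> V" "e \<notin> VS.span BB" by blast
  define Tp where "Tp k = (T ^^ k) e" for k
  have Tp_V: "Tp k \<in> V" for k
  proof (induction k)
    case 0 then show ?case using e by (simp add: Tp_def)
  next
    case (Suc k) then show ?case by (simp add: Tp_def T_in)
  qed
  have Tp_Suc: "Tp (Suc k) = T (Tp k)" for k by (simp add: Tp_def)
  have S_Tp: "S (Tp (Suc k)) = Tp k" for k using S_T[OF Tp_V[of k]] by (simp add: Tp_Suc)
  define P where "P k \<longleftrightarrow> Tp k \<in> VS.span (BB \<union> Tp ` {..<k})" for k
  have ind: "(\<forall>j<k. \<not> P j) \<Longrightarrow> VS.independent (BB \<union> Tp ` {..<k}) \<and> finite (BB \<union> Tp ` {..<k})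
      \<and> card (BB \<union> Tp ` {..<k}) = card BB + k" for k
  proof (induction k)
    case 0 then show ?case using BB_indep BB_fin by simp
  next
    case (Suc k)
    have IH: "VS.independent (BB \<union> Tp ` {..<k}) \<and> finite (BB \<union> Tp ` {..<k})
      \<and> card (BB \<union> Tp ` {..<k}) = card BB + k" using Suc.IH Suc.prems by simp
    have nP: "\<not> P k" using Suc.prems by simp
    have eq: "BB \<union> Tp ` {..<Suc k} = insert (Tp k) (BB \<union> Tp ` {..<k})" by (auto simp: lessThan_Suc)
    have nsp: "Tp k \<notin> VS.span (BB \<union> Tp ` {..<k})" using nP by (simp add: P_def)
    have nin: "Tp k \<notin> BB \<union> Tp ` {..<k}"
    proof
      assume "Tp k \<in> BB \<union> Tp ` {..<k}"
      then have "Tp k \<in> VS.span (BB \<union> Tp ` {..<k})" by (rule VS.span_base)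
      with nsp show False by contradiction
    qed
    show ?case unfolding eq using IH nsp nin by (simp add: VS.independent_insert)
  qed
  have sub: "BB \<union> Tp ` {..<k} \<subseteq> V" for k using BB_V Tp_V by blast
  have exP: "\<exists>k. P k"
  proof (rule ccontr)
    assume "\<not> (\<exists>k. P k)"
    then have "\<forall>j<Suc n. \<not> P j" by blast
    from ind[OF this] have i1: "VS.independent (BB \<union> Tp ` {..<Suc n})"
      and i2: "card (BB \<union> Tp ` {..<Suc n}) = card BB + Suc n" by auto
    have "card (BB \<union> Tp ` {..<Suc n}) \<le> n" using indep_bound[OF sub i1] by blast
    then show False using i2 by simp
  qed
  define d where "d = (LEAST k. P k)"
  have Pd: "P d" unfolding d_def using exP by (rule LeastI_ex)
  have nP: "\<not> P j" if "j < d" for j using that unfolding d_def by (rule not_less_Least)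
  have "d \<noteq> 0"
  proof
    assume "d = 0"
    then have "P 0" using Pd by simp
    then show False using e by (simp add: P_def Tp_def)
  qed
  then obtain m where dm: "d = Suc m" by (cases d) auto
  have "Tp d \<in> VS.span (BB \<union> Tp ` {..<d})" using Pd by (simp add: P_def)
  then obtain w y where w: "w \<in> VS.span BB" and y: "y \<in> VS.span (Tp ` {..<d})" and wy: "Tp d = w + y"
    unfolding VS.span_Un by blast
  obtain c where yc: "y = (\<Sum>i<d. sc (c i) (Tp i))"
    using subsetD[OF span_image_repr[of "{..<d}" Tp] y] by auto
  have wV: "w \<in> V" using w spanBB_V by blast
  have rep: "Tp (Suc m) = w + (\<Sum>i<Suc m. sc (c i) (Tp i))" using wy yc dm by simp
  have c0: "c 0 \<noteq> 0"
  proof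
    assume c0: "c 0 = 0"
    have sh: "(\<Sum>i<Suc m. sc (c i) (Tp i)) = sc (c 0) (Tp 0) + (\<Sum>i<m. sc (c (Suc i)) (Tp (Suc i)))"
      by (rule sum.lessThan_Suc_shift)
    have r2: "Tp (Suc m) = w + (\<Sum>i<m. sc (c (Suc i)) (Tp (Suc i)))"
      unfolding rep sh c0 by simp
    have sv: "(\<Sum>i<m. sc (c (Suc i)) (Tp (Suc i))) \<in> V" by (rule V_sum) (rule Tp_V)
    have "Tp m = S (Tp (Suc m))" by (rule S_Tp[symmetric])
    also have "\<dots> = S w + S (\<Sum>i<m. sc (c (Suc i)) (Tp (Suc i)))" unfolding r2 by (rule S_add[OF wV sv])
    also have "S (\<Sum>i<m. sc (c (Suc i)) (Tp (Suc i))) = (\<Sum>i<m. sc (phi (c (Suc i))) (S (Tp (Suc i))))"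
      by (rule S_sum) (auto intro: Tp_V)
    also have "\<dots> = (\<Sum>i<m. sc (phi (c (Suc i))) (Tp i))" by (simp add: S_Tp)
    finally have TpE: "Tp m = S w + (\<Sum>i<m. sc (phi (c (Suc i))) (Tp i))" .
    have a1: "S w \<in> VS.span (BB \<union> Tp ` {..<m})"
      using S_spanBB[OF w] VS.span_mono[of BB "BB \<union> Tp ` {..<m}"] by blast
    have a2: "(\<Sum>i<m. sc (phi (c (Suc i))) (Tp i)) \<in> VS.span (BB \<union> Tp ` {..<m})"
      by (intro VS.span_sum VS.span_scale VS.span_base) auto
    have "P m" unfolding P_def TpE by (rule VS.span_add[OF a1 a2])
    then show False using nP dm by simp
  qed
  obtain z yy where z: "z \<noteq> 0" and y0: "yy 0 = c 0 * z ^ q"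
    and yS: "\<forall>i. yy (Suc i) = yy i ^ q + c (Suc i) * z ^ q" and ym: "yy m = z"
    using Ypol_seq[of c m, OF c0] by blast
  define x0 where "x0 = (\<Sum>i<Suc m. sc (yy i) (Tp i))"
  have x0V: "x0 \<in> V" unfolding x0_def by (rule V_sum) (rule Tp_V)
  have A: "T x0 = (\<Sum>i<m. sc (yy i ^ q) (Tp (Suc i))) + sc (z ^ q) (Tp (Suc m))"
  proof -
    have "T x0 = (\<Sum>i<Suc m. sc (yy i ^ q) (T (Tp i)))" unfolding x0_def
      by (rule T_sum) (auto intro: Tp_V)
    also have "\<dots> = (\<Sum>i<Suc m. sc (yy i ^ q) (Tp (Suc i)))" by (simp add: Tp_Suc)
    also have "\<dots> = (\<Sum>i<m. sc (yy i ^ q) (Tp (Suc i))) + sc (z ^ q) (Tp (Suc m))" using ym by simp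
    finally show ?thesis .
  qed
  have B: "sc (z ^ q) (Tp (Suc m)) = sc (z ^ q) w + (sc (z ^ q * c 0) (Tp 0)
      + (\<Sum>i<m. sc (z ^ q * c (Suc i)) (Tp (Suc i))))"
  proof -
    have "sc (z ^ q) (Tp (Suc m)) = sc (z ^ q) w + sc (z ^ q) (\<Sum>i<Suc m. sc (c i) (Tp i))"
      unfolding rep by (rule VS.scale_right_distrib)
    also have "sc (z ^ q) (\<Sum>i<Suc m. sc (c i) (Tp i)) = (\<Sum>i<Suc m. sc (z ^ q * c i) (Tp i))"
      by (simp only: VS.scale_sum_right VS.scale_scale)
    also have "\<dots> = sc (z ^ q * c 0) (Tp 0) + (\<Sum>i<m. sc (z ^ q * c (Suc i)) (Tp (Suc i)))"
      by (rule sum.lessThan_Suc_shift)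
    finally show ?thesis .
  qed
  have C: "x0 = sc (yy 0) (Tp 0) + (\<Sum>i<m. sc (yy (Suc i)) (Tp (Suc i)))"
    unfolding x0_def by (rule sum.lessThan_Suc_shift)
  have D: "(\<Sum>i<m. sc (yy (Suc i)) (Tp (Suc i))) = (\<Sum>i<m. sc (yy i ^ q) (Tp (Suc i)))
      + (\<Sum>i<m. sc (z ^ q * c (Suc i)) (Tp (Suc i)))"
    using yS by (simp add: VS.scale_left_distrib sum.distrib mult.commute)
  have E: "sc (yy 0) (Tp 0) = sc (z ^ q * c 0) (Tp 0)" using y0 by (simp add: mult.commute)
  have Tx0: "T x0 = x0 + sc (z ^ q) w"
  proof -
    have "T x0 = (\<Sum>i<m. sc (yy i ^ q) (Tp (Suc i))) + (sc (z ^ q) w + (sc (z ^ q * c 0) (Tp 0)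
      + (\<Sum>i<m. sc (z ^ q * c (Suc i)) (Tp (Suc i)))))" using A B by simp
    also have "\<dots> = (sc (yy 0) (Tp 0) + ((\<Sum>i<m. sc (yy i ^ q) (Tp (Suc i)))
      + (\<Sum>i<m. sc (z ^ q * c (Suc i)) (Tp (Suc i))))) + sc (z ^ q) w"
      unfolding E by (simp only: add_ac)
    also have "\<dots> = x0 + sc (z ^ q) w" using C D by simp
    finally show ?thesis .
  qed
  have "sc (z ^ q) w \<in> VS.span BB" using w by (rule VS.span_scale)
  then obtain b where b: "sc (z ^ q) w = (\<Sum>u\<in>BB. sc (b u) u)" using spanBB_repr by blast
  have "\<forall>u. \<exists>s. s - s ^ q = b u" using solve_artin by blast
  then obtain t where t: "\<forall>u. t u - t u ^ q = b u" by (rule choice[THEN exE]) blast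
  define w' where "w' = (\<Sum>u\<in>BB. sc (t u) u)"
  have w'sp: "w' \<in> VS.span BB" unfolding w'_def by (rule sumBB_span)
  have w'V: "w' \<in> V" using w'sp spanBB_V by blast
  have Tw': "T w' = (\<Sum>u\<in>BB. sc (t u ^ q) u)"
  proof -
    have "T w' = (\<Sum>u\<in>BB. sc (t u ^ q) (T u))" unfolding w'_def
      by (rule T_sum[OF BB_fin]) (use BB_V in blast)
    also have "\<dots> = (\<Sum>u\<in>BB. sc (t u ^ q) u)" by (rule sum.cong) (simp_all add: T_fix)
    finally show ?thesis .
  qed
  have w'd: "w' - T w' = sc (z ^ q) w"
  proof -
    have "w' - T w' = w' - (\<Sum>u\<in>BB. sc (t u ^ q) u)" by (simp only: Tw')
    also have "\<dots> = (\<Sum>u\<in>BB. sc (t u) u - sc (t u ^ q) u)" unfolding w'_def by (simp only: sum_subtractf)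
    also have "\<dots> = (\<Sum>u\<in>BB. sc (t u - t u ^ q) u)" by (simp add: VS.scale_left_diff_distrib)
    also have "\<dots> = (\<Sum>u\<in>BB. sc (b u) u)" using t by simp
    finally show ?thesis using b by simp
  qed
  define x where "x = x0 + w'"
  have xV: "x \<in> V" unfolding x_def using x0V w'V by (rule V_add)
  have Tx: "T x = x"
  proof -
    have "T x = T x0 + T w'" unfolding x_def by (rule T_add[OF x0V w'V])
    also have "\<dots> = x0 + sc (z ^ q) w + (w' - sc (z ^ q) w)" using Tx0 w'd by (simp add: algebra_simps)
    also have "\<dots> = x" unfolding x_def by simp
    finally show ?thesis .
  qed
  have "S x = x" using S_T[OF xV] Tx by simp
  then have "x \<in> Fx" using xV by (simp add: Fx_def)
  then have "x \<in> VS.span BB" using Fx_span by blast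
  then have x0sp: "x0 \<in> VS.span BB" using VS.span_diff[OF _ w'sp, of x] by (simp add: x_def)
  have C2: "x0 = (\<Sum>i<m. sc (yy i) (Tp i)) + sc z (Tp m)" unfolding x0_def using ym by simp
  have "sc z (Tp m) = x0 - (\<Sum>i<m. sc (yy i) (Tp i))" using C2 by simp
  moreover have "x0 \<in> VS.span (BB \<union> Tp ` {..<m})" using x0sp VS.span_mono[of BB "BB \<union> Tp ` {..<m}"] by blast
  moreover have "(\<Sum>i<m. sc (yy i) (Tp i)) \<in> VS.span (BB \<union> Tp ` {..<m})"
    by (intro VS.span_sum VS.span_scale VS.span_base) auto
  ultimately have "sc z (Tp m) \<in> VS.span (BB \<union> Tp ` {..<m})" using VS.span_diff by simp
  then have "sc (inverse z) (sc z (Tp m)) \<in> VS.span (BB \<union> Tp ` {..<m})" by (rule VS.span_scale)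
  then have "P m" using z by (simp add: P_def)
  then show False using nP dm by simp
qed

declare sc_apply [simp]

lemma main_bij: "V \<subseteq> VS.span BB" by (rule lang_span)

end

context lang
begin

lemma lang_main:
  "finite Fx \<and> card Fx \<le> q ^ n \<and>
   (card Fx = q ^ n \<longleftrightarrow> ((\<forall>a\<in>V. S a = 0 \<longrightarrow> a = 0) \<and> (\<forall>b\<in>V. \<exists>a\<in>V. S a = b)))"
proof -
  have cF: "finite Fx" "card Fx = q ^ card BB" using card_Fx by auto
  have le: "q ^ card BB \<le> q ^ n" using BB_card q_pos by (intro power_increasing) auto
  have iff1: "card Fx = q ^ n \<longleftrightarrow> card BB = n"
    using cF(2) q_ge2 by (simp add: power_inject_exp)
  have iff2: "card BB = n \<longleftrightarrow> ((\<forall>a\<in>V. S a = 0 \<longrightarrow> a = 0) \<and> (\<forall>b\<in>V. \<exists>a\<in>V. S a = b))"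
  proof
    assume "card BB = n"
    then show "(\<forall>a\<in>V. S a = 0 \<longrightarrow> a = 0) \<and> (\<forall>b\<in>V. \<exists>a\<in>V. S a = b)"
      using cardBB_iff span_imp_bij by blast
  next
    assume H: "(\<forall>a\<in>V. S a = 0 \<longrightarrow> a = 0) \<and> (\<forall>b\<in>V. \<exists>a\<in>V. S a = b)"
    interpret LB: lang_bij q phi n S
      by (rule lang_bij.intro[OF lang_axioms]) (unfold_locales, use H in blast, use H in blast)
    show "card BB = n" using cardBB_iff LB.lang_span by blast
  qed
  show ?thesis using cF le iff1 iff2 by simp
qed

end

context lsetup
begin

lemma V0_Vn: "V0 = Vn n" by (simp add: V0_def Vn_def)

lemma lang_inst: "lang q phi n S"
proof -
  show ?thesis
  proof (rule lang.intro)
    show "fqc q phi" by (rule fqc_axioms)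
    show "lang_axioms phi n S"
    proof
      fix a :: "nat \<Rightarrow> 'a" assume "a \<in> Vn n" then show "S a \<in> Vn n" using S_V0 V0_Vn by simp
    next
      fix a b :: "nat \<Rightarrow> 'a" show "S (a + b) = S a + S b" by (rule S_add)
    next
      fix a :: "nat \<Rightarrow> 'a" and c show "S (sc c a) = sc (phi c) (S a)" by (rule S_scale)
    qed
  qed
qed

lemma Fix_eq: "Fix = lang.Fx n S" 
  using lang.Fx_def[OF lang_inst] by (simp add: Fix_def V0_Vn)

lemma setup_main:
  "finite (ker_map_mod H0 H1 f sm1) \<and> card (ker_map_mod H0 H1 f sm1) \<le> q ^ n \<and>
   (card (ker_map_mod H0 H1 f sm1) = q ^ n \<longleftrightarrow>
     bij_betw (map_mod H0 H1 f skew_sigma) (quot_mod H0 skew_sigma) (quot_mod H1 skew_sigma))"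
proof -
  have L: "finite Fix \<and> card Fix \<le> q ^ n \<and>
   (card Fix = q ^ n \<longleftrightarrow> ((\<forall>a\<in>V0. S a = 0 \<longrightarrow> a = 0) \<and> (\<forall>b\<in>V0. \<exists>a\<in>V0. S a = b)))"
    using lang.lang_main[OF lang_inst] by (simp add: Fix_eq V0_Vn)
  have fin: "finite (ker_map_mod H0 H1 f sm1) \<longleftrightarrow> finite Fix"
    using bij_betw_finite[OF ker_bij] by simp
  have cd: "card (ker_map_mod H0 H1 f sm1) = card Fix"
    using bij_betw_same_card[OF ker_bij] by simp
  show ?thesis using L fin cd sig_bij_S by simp
qed

end

theorem lemma4_aux:
  fixes q :: nat and T :: "'a::field"
    and H0 :: "(nat \<Rightarrow> 'a, 'm) module" and H1 :: "(nat \<Rightarrow> 'a, 'n) module"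
    and f :: "'m \<Rightarrow> 'n" and n :: nat
  assumes "is_alg_closure_of_FqT q T"
    and "left_module (skew_poly_ring q) H0" and "left_module (skew_poly_ring q) H1"
    and "free_finite_rank (skew_poly_ring q) H0" and "free_finite_rank (skew_poly_ring q) H1"
    and "f \<in> left_module_hom (skew_poly_ring q) H0 H1" and "inj_on f (carrier H0)"
    and "coker_dim_eq q H0 H1 f n"
  shows "finite (ker_map_mod H0 H1 f (skew_sigma \<ominus>\<^bsub>skew_poly_ring q\<^esub> \<one>\<^bsub>skew_poly_ring q\<^esub>))
    \<and> card (ker_map_mod H0 H1 f (skew_sigma \<ominus>\<^bsub>skew_poly_ring q\<^esub> \<one>\<^bsub>skew_poly_ring q\<^esub>)) \<le> q ^ n
    \<and> (card (ker_map_mod H0 H1 f (skew_sigma \<ominus>\<^bsub>skew_poly_ring q\<^esub> \<one>\<^bsub>skew_poly_ring q\<^esub>)) = q ^ n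
        \<longleftrightarrow> bij_betw (map_mod H0 H1 f skew_sigma) (quot_mod H0 skew_sigma) (quot_mod H1 skew_sigma))"
proof -
  interpret fqc q "frob_inv q :: 'a \<Rightarrow> 'a" by (rule fqcI[OF assms(1)])
  interpret lsetup q "frob_inv q :: 'a \<Rightarrow> 'a" H0 H1 f n
    by (rule lsetup.intro[OF fqc_axioms]) (unfold_locales, use assms in auto)
  have r: "ring (skew_poly_ring q :: (nat \<Rightarrow> 'a) ring)" using assms(3) by (simp add: left_module_def)
  have "skew_sigma \<ominus>\<^bsub>skew_poly_ring q\<^esub> \<one>\<^bsub>skew_poly_ring q\<^esub> = (sm1 :: nat \<Rightarrow> 'a)"
    by (rule sigma_minus_one[OF r])
  then show ?thesis using setup_main by simp
qed

theorem lemma4: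
  fixes q :: nat and T :: "'a::field"
    and H0 :: "(nat \<Rightarrow> 'a, 'm) module" and H1 :: "(nat \<Rightarrow> 'a, 'n) module"
    and f :: "'m \<Rightarrow> 'n" and n :: nat
  assumes "is_alg_closure_of_FqT q T"
    and "left_module (skew_poly_ring q) H0" and "left_module (skew_poly_ring q) H1"
    and "free_finite_rank (skew_poly_ring q) H0" and "free_finite_rank (skew_poly_ring q) H1"
    and "f \<in> left_module_hom (skew_poly_ring q) H0 H1" and "inj_on f (carrier H0)"
    and "coker_dim_eq q H0 H1 f n"
  shows "finite (ker_map_mod H0 H1 f (skew_sigma \<ominus>\<^bsub>skew_poly_ring q\<^esub> \<one>\<^bsub>skew_poly_ring q\<^esub>))
    \<and> card (ker_map_mod H0 H1 f (skew_sigma \<ominus>\<^bsub>skew_poly_ring q\<^esub> \<one>\<^bsub>skew_poly_ring q\<^esub>)) \<le> q ^ n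
    \<and> (card (ker_map_mod H0 H1 f (skew_sigma \<ominus>\<^bsub>skew_poly_ring q\<^esub> \<one>\<^bsub>skew_poly_ring q\<^esub>)) = q ^ n
        \<longleftrightarrow> bij_betw (map_mod H0 H1 f skew_sigma) (quot_mod H0 skew_sigma) (quot_mod H1 skew_sigma))"
  using lemma4_aux[OF assms] .

end
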